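(* Let $(Y_t,t\ge0)$ be a supercritical ($b<0$) CBI$(\Psi,\Phi)$ process and assume $\int_0\frac{\Phi(u)}{|\Psi(u)|}\,\mathrm{d}u=\infty$ (divergence near $0$). Then for any positive deterministic function $(\eta(t),t\ge0)$, if $(\eta(t)Y_t,t\ge0)$ converges almost surely as $t\to\infty$, its limit is either $0$ almost surely or $\infty$ almost surely.
   Context: Let $\sigma\ge 0$, $b\in\mathbb R$, $\beta\ge 0$, and let $\pi,\nu$ be $\sigma$-finite measures on $(0,\infty)$ with $\int_0^\infty (z\wedge z^2)\pi(\mathrm{d}z)<\infty$ and $\int_0^\infty(1\wedge z)\nu(\mathrm{d}z)<\infty$. The branching mechanism is $\Psi(q)=bq+\frac12\sigma^2q^2+\int_0^\infty(e^{-qu}-1+qu)\pi(\mathrm{d}u)$ and the immigration mechanism is $\Phi(q)=\beta q+\int_0^\infty(1-e^{-qu})\nu(\mathrm{d}u)$, $q\ge 0$; it is assumed that $\Phi(q)>0$ for all $q>0$. For $\lambda\ge 0$, $t\mapsto v_t(\lambda)$ solves $\frac{\partial}{\partial t}v_t(\lambda)=-\Psi(v_t(\lambda))$, $v_0(\lambda)=\lambda$. A CBI$(\Psi,\Phi)$ process is a $[0,\infty)$-valued Markov process $(Y_t)$ with $\mathbb E_x[e^{-\lambda Y_t}]=\exp\big(-xv_t(\lambda)-\int_0^t\Phi(v_s(\lambda))\mathrm{d}s\big)$, where $\mathbb E_x$ refers to the process started at $x\ge0$. *)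

theory Defs
  imports "HOL-Probability.Probability"
begin

definition Psi :: "real \<Rightarrow> real \<Rightarrow> real measure \<Rightarrow> real \<Rightarrow> real" where
  "Psi b \<sigma> \<pi> q = b * q + \<sigma>\<^sup>2 * q\<^sup>2 / 2 + (\<integral>u. (exp (- q * u) - 1 + q * u) \<partial>\<pi>)"

definition Phi :: "real \<Rightarrow> real measure \<Rightarrow> real \<Rightarrow> real" where
  "Phi \<beta> \<nu> q = \<beta> * q + (\<integral>u. (1 - exp (- q * u)) \<partial>\<nu>)"

definition branching_params :: "real \<Rightarrow> real \<Rightarrow> real measure \<Rightarrow> bool" where
  "branching_params b \<sigma> \<pi> \<longleftrightarrow>
     \<sigma> \<ge> 0 \<and> sets \<pi> = sets borel \<and> sigma_finite_measure \<pi> \<and>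
     emeasure \<pi> {..0} = 0 \<and> (\<integral>\<^sup>+ z. ennreal (min z (z\<^sup>2)) \<partial>\<pi>) < \<infinity>"

definition immigration_params :: "real \<Rightarrow> real measure \<Rightarrow> bool" where
  "immigration_params \<beta> \<nu> \<longleftrightarrow>
     \<beta> \<ge> 0 \<and> sets \<nu> = sets borel \<and> sigma_finite_measure \<nu> \<and>
     emeasure \<nu> {..0} = 0 \<and> (\<integral>\<^sup>+ z. ennreal (min 1 z) \<partial>\<nu>) < \<infinity> \<and>
     (\<forall>q>0. Phi \<beta> \<nu> q > 0)"

definition solves_v :: "(real \<Rightarrow> real) \<Rightarrow> (real \<Rightarrow> real \<Rightarrow> real) \<Rightarrow> bool" where
  "solves_v Ps v \<longleftrightarrow>
     (\<forall>l\<ge>0. v 0 l = l \<and>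
        (\<forall>t\<ge>0. v t l \<ge> 0 \<and>
           ((\<lambda>s. v s l) has_real_derivative (- Ps (v t l))) (at t within {0..})))"

definition natural_filtration :: "'a measure \<Rightarrow> (real \<Rightarrow> 'a \<Rightarrow> real) \<Rightarrow> real \<Rightarrow> 'a measure" where
  "natural_filtration M Y s =
     sigma (space M) {Y r -` A \<inter> space M | r A. r \<in> {0..s} \<and> A \<in> sets borel}"

definition CBI :: "'a measure \<Rightarrow> (real \<Rightarrow> real) \<Rightarrow> (real \<Rightarrow> real \<Rightarrow> real) \<Rightarrow> real
                    \<Rightarrow> (real \<Rightarrow> 'a \<Rightarrow> real) \<Rightarrow> bool" where
  "CBI M Ph v x Y \<longleftrightarrow>
     prob_space M \<and>
     (\<forall>t\<ge>0. Y t \<in> borel_measurable M \<and> (\<forall>\<omega>\<in>space M. Y t \<omega> \<ge> 0)) \<and>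
     (AE \<omega> in M. Y 0 \<omega> = x) \<and>
     (\<forall>s\<ge>0. \<forall>t\<ge>0. \<forall>l\<ge>0. AE \<omega> in M.
        real_cond_exp M (natural_filtration M Y s) (\<lambda>\<omega>. exp (- l * Y (s + t) \<omega>)) \<omega>
          = exp (- Y s \<omega> * v t l - integral {0..t} (\<lambda>r. Ph (v r l))))"

end

theory Submission
  imports Defs
begin

lemma param_cont:
  fixes F :: "real \<Rightarrow> real \<Rightarrow> real" and w :: "real \<Rightarrow> real" and \<mu> :: "real measure"
  assumes meas: "\<And>q. q \<in> S \<Longrightarrow> F q \<in> borel_measurable \<mu>"
    and w: "integrable \<mu> w"
    and cont: "AE z in \<mu>. continuous_on S (\<lambda>q. F q z)"
    and bnd: "\<And>q. q \<in> S \<Longrightarrow> AE z in \<mu>. \<bar>F q z\<bar> \<le> w z"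
  shows "continuous_on S (\<lambda>q. \<integral>z. F q z \<partial>\<mu>)"
  unfolding continuous_on_sequentially
proof (intro allI ballI impI)
  fix x a assume a: "a \<in> S" and h: "(\<forall>n. x n \<in> S) \<and> x \<longlonglongrightarrow> a"
  show "((\<lambda>q. \<integral>z. F q z \<partial>\<mu>) \<circ> x) \<longlonglongrightarrow> (\<integral>z. F a z \<partial>\<mu>)"
    unfolding comp_def
  proof (rule integral_dominated_convergence[where w=w])
    show "F a \<in> borel_measurable \<mu>" using meas a .
    show "\<And>i. F (x i) \<in> borel_measurable \<mu>" using meas h by auto
    show "integrable \<mu> w" by fact
    show "AE z in \<mu>. (\<lambda>i. F (x i) z) \<longlonglongrightarrow> F a z"
      using cont
    proof eventually_elim
      case (elim z)
      then show ?case using h a unfolding continuous_on_sequentially comp_def by blast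
    qed
    show "\<And>i. AE z in \<mu>. norm (F (x i) z) \<le> w z" using bnd h by auto
  qed
qed

lemma meas_tr: "sets \<mu> = sets borel \<Longrightarrow> f \<in> borel_measurable borel \<Longrightarrow> f \<in> borel_measurable \<mu>"
  using measurable_cong_sets[of \<mu> borel borel borel] by simp

lemma AE_pos: "sets \<mu> = sets borel \<Longrightarrow> emeasure \<mu> {..0} = 0 \<Longrightarrow> AE z in \<mu>. (z::real) > 0"
  by (rule AE_I'[of "{..0}"]) auto

lemma expb1: "0 \<le> exp (- y) - 1 + (y::real)"
  using exp_ge_add_one_self[of "-y"] by simp

lemma expb2: assumes "(y::real) \<ge> 0" shows "exp (- y) - 1 + y \<le> y\<^sup>2 / 2"
proof -
  have "(\<lambda>t. exp (- t) - 1 + t - t\<^sup>2/2) y \<le> (\<lambda>t. exp (- t) - 1 + t - t\<^sup>2/2) 0"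
  proof (rule DERIV_nonpos_imp_nonincreasing[OF assms])
    fix t :: real assume "0 \<le> t" "t \<le> y"
    have "((\<lambda>t. exp (- t) - 1 + t - t\<^sup>2/2) has_real_derivative (- exp (-t) + 1 - t)) (at t)"
      by (auto intro!: derivative_eq_intros simp: power2_eq_square)
    moreover have "- exp (-t) + 1 - t \<le> 0" using exp_ge_add_one_self[of "-t"] by simp
    ultimately show "\<exists>y. ((\<lambda>t. exp (- t) - 1 + t - t\<^sup>2/2) has_real_derivative y) (at t) \<and> y \<le> 0" by blast
  qed
  then show ?thesis by simp
qed

lemma expb3: "(y::real) \<ge> 0 \<Longrightarrow> 1 - exp (-y) \<le> y" "0 \<le> 1 - exp (-(y::real))" if "y \<ge> 0"
  using exp_ge_add_one_self[of "-y"] that by auto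


lemma bp_facts:
  assumes "branching_params b \<sigma> \<pi>"
  shows "sets \<pi> = sets borel" "AE z in \<pi>. z > (0::real)" "integrable \<pi> (\<lambda>z. min z (z\<^sup>2))"
proof -
  show s: "sets \<pi> = sets borel" using assms unfolding branching_params_def by auto
  show ae: "AE z in \<pi>. z > (0::real)" using assms AE_pos[OF s] unfolding branching_params_def by auto
  have fin: "(\<integral>\<^sup>+ z. ennreal (min z (z\<^sup>2)) \<partial>\<pi>) < \<infinity>" using assms unfolding branching_params_def by auto
  show "integrable \<pi> (\<lambda>z. min z (z\<^sup>2))"
  proof (rule integrableI_bounded)
    show "(\<lambda>z. min z (z\<^sup>2)) \<in> borel_measurable \<pi>" by (rule meas_tr[OF s]) measurable
    have "(\<integral>\<^sup>+ z. ennreal (norm (min z (z\<^sup>2))) \<partial>\<pi>) = (\<integral>\<^sup>+ z. ennreal (min z (z\<^sup>2)) \<partial>\<pi>)"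
      by (rule nn_integral_cong_AE) (use ae in eventually_elim, auto)
    then show "(\<integral>\<^sup>+ z. ennreal (norm (min z (z\<^sup>2))) \<partial>\<pi>) < \<infinity>" using fin by simp
  qed
qed

lemma ip_facts:
  assumes "immigration_params \<beta> \<nu>"
  shows "sets \<nu> = sets borel" "AE z in \<nu>. z > (0::real)" "integrable \<nu> (\<lambda>z. min 1 z)"
    "\<beta> \<ge> 0" "\<And>q. q > 0 \<Longrightarrow> Phi \<beta> \<nu> q > 0"
proof -
  show s: "sets \<nu> = sets borel" using assms unfolding immigration_params_def by auto
  show ae: "AE z in \<nu>. z > (0::real)" using assms AE_pos[OF s] unfolding immigration_params_def by auto
  show "\<beta> \<ge> 0" "\<And>q. q > 0 \<Longrightarrow> Phi \<beta> \<nu> q > 0" using assms unfolding immigration_params_def by auto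
  have fin: "(\<integral>\<^sup>+ z. ennreal (min 1 z) \<partial>\<nu>) < \<infinity>" using assms unfolding immigration_params_def by auto
  show "integrable \<nu> (\<lambda>z. min 1 z)"
  proof (rule integrableI_bounded)
    show "(\<lambda>z. min 1 z) \<in> borel_measurable \<nu>" by (rule meas_tr[OF s]) measurable
    have "(\<integral>\<^sup>+ z. ennreal (norm (min 1 z)) \<partial>\<nu>) = (\<integral>\<^sup>+ z. ennreal (min 1 z) \<partial>\<nu>)"
      by (rule nn_integral_cong_AE) (use ae in eventually_elim, auto)
    then show "(\<integral>\<^sup>+ z. ennreal (norm (min 1 (z::real))) \<partial>\<nu>) < \<infinity>" using fin by simp
  qed
qed

lemma phi_bound: fixes q z Q :: real assumes "q \<ge> 0" "z > 0" "q \<le> Q"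
  shows "\<bar>1 - exp (- (q * z))\<bar> \<le> (Q + 1) * min 1 z"
proof -
  have a: "0 \<le> 1 - exp (- (q * z))" "1 - exp (- (q * z)) \<le> q * z" "1 - exp (- (q * z)) \<le> 1"
    using expb3[of "q*z"] assms by auto
  show ?thesis
  proof (cases "z \<le> 1")
    case True
    have "q * z \<le> (Q+1) * z" using assms by (intro mult_right_mono) auto
    then show ?thesis using a True by auto
  next
    case False
    have "1 \<le> Q + 1" using assms by auto
    then have "1 - exp (- (q * z)) \<le> Q + 1" using a by linarith
    then show ?thesis using a False by auto
  qed
qed

lemma phi_integrable:
  assumes "immigration_params \<beta> \<nu>" "q \<ge> 0"
  shows "integrable \<nu> (\<lambda>z. 1 - exp (- q * z))"
proof (rule Bochner_Integration.integrable_bound[OF integrable_mult_right[OF ip_facts(3)[OF assms(1)], of "q+1"]])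
  show "(\<lambda>z. 1 - exp (- q * z)) \<in> borel_measurable \<nu>" by (rule meas_tr[OF ip_facts(1)[OF assms(1)]]) measurable
  show "AE z in \<nu>. norm (1 - exp (- q * z)) \<le> norm ((q + 1) * min 1 z)"
    using ip_facts(2)[OF assms(1)]
  proof eventually_elim
    case (elim z) then show ?case using phi_bound[of q z q] assms by auto
  qed
qed

lemma phi_cont:
  assumes "immigration_params \<beta> \<nu>"
  shows "continuous_on {0..Q} (Phi \<beta> \<nu>)"
proof -
  have "continuous_on {0..Q} (\<lambda>q. \<integral>z. 1 - exp (- q * z) \<partial>\<nu>)"
  proof (rule param_cont[where w="\<lambda>z. (Q+1) * min 1 z"])
    show "\<And>q. (\<lambda>z. 1 - exp (- q * z)) \<in> borel_measurable \<nu>" by (rule meas_tr[OF ip_facts(1)[OF assms(1)]]) measurable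
    show "integrable \<nu> (\<lambda>z. (Q + 1) * min 1 z)" using ip_facts(3)[OF assms] by simp
    show "AE z in \<nu>. continuous_on {0..Q} (\<lambda>q. 1 - exp (- q * z))" by (auto intro!: continuous_intros)
    show "AE z in \<nu>. \<bar>1 - exp (- q * z)\<bar> \<le> (Q + 1) * min 1 z" if "q \<in> {0..Q}" for q
      using ip_facts(2)[OF assms(1)]
    proof eventually_elim
      case (elim z) then show ?case using phi_bound[of q z Q] that by auto
    qed
  qed
  then show ?thesis unfolding Phi_def by (auto intro!: continuous_intros)
qed

lemma phi_mono:
  assumes "immigration_params \<beta> \<nu>" "0 \<le> p" "p \<le> q"
  shows "Phi \<beta> \<nu> p \<le> Phi \<beta> \<nu> q"
proof -
  have "(\<integral>z. 1 - exp (- p * z) \<partial>\<nu>) \<le> (\<integral>z. 1 - exp (- q * z) \<partial>\<nu>)"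
  proof (rule integral_mono_AE)
    show "integrable \<nu> (\<lambda>z. 1 - exp (- p * z))" "integrable \<nu> (\<lambda>z. 1 - exp (- q * z))"
      using phi_integrable assms by auto
    show "AE z in \<nu>. 1 - exp (- p * z) \<le> 1 - exp (- q * z)"
      using ip_facts(2)[OF assms(1)]
    proof eventually_elim
      case (elim z) then show ?case using assms by (auto intro: mult_right_mono)
    qed
  qed
  moreover have "\<beta> * p \<le> \<beta> * q" using ip_facts(4)[OF assms(1)] assms by (intro mult_left_mono) auto
  ultimately show ?thesis unfolding Phi_def by simp
qed

lemma phi_zero: "Phi \<beta> \<nu> 0 = 0" unfolding Phi_def by simp

lemma phi_nonneg: assumes "immigration_params \<beta> \<nu>" "q \<ge> 0" shows "Phi \<beta> \<nu> q \<ge> 0"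
  using ip_facts(5)[OF assms(1), of q] assms(2) by (cases "q = 0") (auto simp: phi_zero)


lemma psi_bound1: fixes u z :: real assumes "0 \<le> u" "u \<le> 1" "z > 0"
  shows "\<bar>exp (- u * z) - 1 + u * z\<bar> \<le> min z (z\<^sup>2)"
proof -
  have uz1: "0 \<le> u * z" using assms by (metis less_imp_le mult_nonneg_nonneg)
  have uz2: "u * z \<le> z" using assms by (metis less_imp_le mult_left_le_one_le)
  note uz = uz1 uz2
  have a: "0 \<le> exp (- (u * z)) - 1 + u * z" "exp (- (u * z)) - 1 + u * z \<le> (u*z)\<^sup>2/2"
    using expb1 expb2[OF uz(1)] by auto
  have b: "exp (- (u * z)) - 1 + u * z \<le> u * z" using uz by simp
  have "(u*z)\<^sup>2 \<le> z\<^sup>2" using uz by (intro power_mono) auto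
  moreover have "0 \<le> (u*z)\<^sup>2" by simp
  ultimately have c2: "exp (- (u * z)) - 1 + u * z \<le> z\<^sup>2" using a by linarith
  have c1: "exp (- (u * z)) - 1 + u * z \<le> z" using b uz by linarith
  have e: "exp (- u * z) = exp (- (u * z))" by simp
  show ?thesis unfolding e using a(1) c1 c2 by (simp add: abs_of_nonneg)
qed

lemma psi_bound2: fixes u z :: real assumes "0 \<le> u" "z > 0"
  shows "\<bar>exp (- u * z) - 1 + u * z\<bar> \<le> (u + u\<^sup>2) * min z (z\<^sup>2)"
proof -
  have uz: "0 \<le> u * z" using assms by (metis less_imp_le mult_nonneg_nonneg)
  have a: "0 \<le> exp (- (u * z)) - 1 + u * z" "exp (- (u * z)) - 1 + u * z \<le> (u*z)\<^sup>2/2"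
    using expb1 expb2[OF uz(1)] by auto
  have b: "exp (- (u * z)) - 1 + u * z \<le> u * z" using uz by simp
  show ?thesis
  proof (cases "z \<le> 1")
    case True
    then have "z\<^sup>2 \<le> z" by (simp add: power2_eq_square mult_left_le_one_le assms less_imp_le)
    then have m: "min z (z\<^sup>2) = z\<^sup>2" by simp
    have "(u*z)\<^sup>2/2 \<le> u\<^sup>2 * z\<^sup>2" by (simp add: power_mult_distrib)
    also have "\<dots> \<le> (u + u\<^sup>2) * z\<^sup>2" using assms by (intro mult_right_mono) auto
    finally have c: "exp (- (u * z)) - 1 + u * z \<le> (u + u\<^sup>2) * z\<^sup>2" using a by linarith
    have e: "exp (- u * z) = exp (- (u * z))" by simp
    show ?thesis unfolding e m using a(1) c by (simp add: abs_of_nonneg)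
  next
    case False
    then have "z \<le> z\<^sup>2" by (simp add: power2_eq_square)
    then have m: "min z (z\<^sup>2) = z" by simp
    have "u * z \<le> (u + u\<^sup>2) * z" using assms by (intro mult_right_mono) auto
    then have c: "exp (- (u * z)) - 1 + u * z \<le> (u + u\<^sup>2) * z" using b by linarith
    have e: "exp (- u * z) = exp (- (u * z))" by simp
    show ?thesis unfolding e m using a(1) c by (simp add: abs_of_nonneg)
  qed
qed

lemma psi_integrable:
  assumes "branching_params b \<sigma> \<pi>" "u \<ge> 0"
  shows "integrable \<pi> (\<lambda>z. exp (- u * z) - 1 + u * z)"
proof (rule Bochner_Integration.integrable_bound[OF integrable_mult_right[OF bp_facts(3)[OF assms(1)], of "u + u\<^sup>2"]])
  show "(\<lambda>z. exp (- u * z) - 1 + u * z) \<in> borel_measurable \<pi>" by (rule meas_tr[OF bp_facts(1)[OF assms(1)]]) measurable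
  show "AE z in \<pi>. norm (exp (- u * z) - 1 + u * z) \<le> norm ((u + u\<^sup>2) * min z (z\<^sup>2))"
    using bp_facts(2)[OF assms(1)]
  proof eventually_elim
    case (elim z)
    have "0 \<le> (u + u\<^sup>2) * min z (z\<^sup>2)" using elim assms by auto
    then show ?case using psi_bound2[of u z] assms elim by auto
  qed
qed

lemma psi_cont:
  assumes "branching_params b \<sigma> \<pi>"
  shows "continuous_on {0..1} (Psi b \<sigma> \<pi>)"
proof -
  have "continuous_on {0..1} (\<lambda>q. \<integral>z. exp (- q * z) - 1 + q * z \<partial>\<pi>)"
  proof (rule param_cont[where w="\<lambda>z. min z (z\<^sup>2)"])
    show "\<And>q. (\<lambda>z. exp (- q * z) - 1 + q * z) \<in> borel_measurable \<pi>" by (rule meas_tr[OF bp_facts(1)[OF assms(1)]]) measurable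
    show "integrable \<pi> (\<lambda>z. min z (z\<^sup>2))" using bp_facts(3)[OF assms] by simp
    show "AE z in \<pi>. continuous_on {0..1} (\<lambda>q. exp (- q * z) - 1 + q * z)" by (auto intro!: continuous_intros)
    show "AE z in \<pi>. \<bar>exp (- q * z) - 1 + q * z\<bar> \<le> min z (z\<^sup>2)" if "q \<in> {0..1}" for q
      using bp_facts(2)[OF assms(1)]
    proof eventually_elim
      case (elim z) then show ?case using psi_bound1[of q z] that by auto
    qed
  qed
  then show ?thesis unfolding Psi_def by (auto intro!: continuous_intros)
qed

lemma psi_zero: "Psi b \<sigma> \<pi> 0 = 0" unfolding Psi_def by simp

lemma psi_near0:
  assumes "branching_params b \<sigma> \<pi>" "b < 0"
  shows "\<exists>d. 0 < d \<and> d \<le> 1 \<and> (\<forall>u. 0 < u \<and> u \<le> d \<longrightarrow> Psi b \<sigma> \<pi> u \<le> (b/2) * u)"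
proof -
  define H where "H u = (\<integral>z. (exp (- u * z) - 1 + u * z) / u \<partial>\<pi>)" for u
  have H0: "(H \<longlongrightarrow> 0) (at_right 0)"
  proof (rule tendsto_at_right_sequentially[of 0 1])
    fix S :: "nat \<Rightarrow> real" assume S: "\<And>n. 0 < S n" "\<And>n. S n < 1" "S \<longlonglongrightarrow> 0"
    have "(\<lambda>n. \<integral>z. (exp (- S n * z) - 1 + S n * z) / S n \<partial>\<pi>) \<longlonglongrightarrow> (\<integral>z. 0 \<partial>\<pi>)"
    proof (rule integral_dominated_convergence[where w="\<lambda>z. min z (z\<^sup>2)"])
      show "(\<lambda>z. 0) \<in> borel_measurable \<pi>" by simp
      show "\<And>i. (\<lambda>z. (exp (- S i * z) - 1 + S i * z) / S i) \<in> borel_measurable \<pi>"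
        by (rule meas_tr[OF bp_facts(1)[OF assms(1)]]) measurable
      show "integrable \<pi> (\<lambda>z. min z (z\<^sup>2))" using bp_facts(3)[OF assms(1)] .
      show "AE z in \<pi>. (\<lambda>i. (exp (- S i * z) - 1 + S i * z) / S i) \<longlonglongrightarrow> 0"
        using bp_facts(2)[OF assms(1)]
      proof eventually_elim
        case (elim z)
        show ?case
        proof (rule real_tendsto_sandwich[where f="\<lambda>n. 0" and h="\<lambda>n. S n * z\<^sup>2 / 2"])
          show "\<forall>\<^sub>F n in sequentially. 0 \<le> (exp (- S n * z) - 1 + S n * z) / S n"
            using expb1 S by (auto intro!: divide_nonneg_pos always_eventually)
          show "\<forall>\<^sub>F n in sequentially. (exp (- S n * z) - 1 + S n * z) / S n \<le> S n * z\<^sup>2 / 2"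
          proof (intro always_eventually allI)
            fix n
            have "exp (- (S n * z)) - 1 + S n * z \<le> (S n * z)\<^sup>2 / 2"
              using expb2[of "S n * z"] S(1)[of n] elim by auto
            then show "(exp (- S n * z) - 1 + S n * z) / S n \<le> S n * z\<^sup>2 / 2"
              using S(1)[of n] by (simp add: divide_simps power2_eq_square) (simp add: algebra_simps)
          qed
          show "(\<lambda>n. 0) \<longlonglongrightarrow> (0::real)" by simp
          show "(\<lambda>n. S n * z\<^sup>2 / 2) \<longlonglongrightarrow> 0" by (intro tendsto_divide_zero tendsto_mult_left_zero S(3))
        qed
      qed
      show "AE z in \<pi>. norm ((exp (- S i * z) - 1 + S i * z) / S i) \<le> min z (z\<^sup>2)" for i
        using bp_facts(2)[OF assms(1)]
      proof eventually_elim
        case (elim z)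
        have uz: "0 \<le> S i * z" using S(1)[of i] elim by (metis less_imp_le mult_nonneg_nonneg)
        have a: "0 \<le> exp (- (S i * z)) - 1 + S i * z" "exp (- (S i * z)) - 1 + S i * z \<le> (S i*z)\<^sup>2/2"
          using expb1 expb2[OF uz] by auto
        have b: "exp (- (S i * z)) - 1 + S i * z \<le> S i * z" using uz by simp
        have c1: "(exp (- S i * z) - 1 + S i * z) / S i \<le> z"
          using b S(1)[of i] by (simp add: divide_simps mult.commute)
        have "(exp (- S i * z) - 1 + S i * z) / S i \<le> S i * z\<^sup>2 / 2"
          using a S(1)[of i] by (simp add: divide_simps power2_eq_square) (simp add: algebra_simps)
        also have "\<dots> \<le> z\<^sup>2" using S(1,2)[of i] elim
          by (simp add: mult_left_le_one_le less_imp_le)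
        finally have c2: "(exp (- S i * z) - 1 + S i * z) / S i \<le> z\<^sup>2" .
        have "0 \<le> (exp (- S i * z) - 1 + S i * z) / S i" using a S(1)[of i] by simp
        then show ?case using c1 c2 by (simp only: real_norm_def abs_of_nonneg)
      qed
    qed
    then show "(\<lambda>n. H (S n)) \<longlonglongrightarrow> 0" unfolding H_def by simp
  qed simp
  have eq: "Psi b \<sigma> \<pi> u / u = b + \<sigma>\<^sup>2 * u / 2 + H u" if "u > 0" for u
  proof -
    have "H u = (\<integral>z. exp (- u * z) - 1 + u * z \<partial>\<pi>) / u" unfolding H_def by simp
    then show ?thesis using that unfolding Psi_def by (simp add: field_simps power2_eq_square)
  qed
  have "((\<lambda>u. b + \<sigma>\<^sup>2 * u / 2 + H u) \<longlongrightarrow> b + \<sigma>\<^sup>2 * 0 / 2 + 0) (at_right 0)"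
    by (intro tendsto_intros H0) auto
  then have "((\<lambda>u. b + \<sigma>\<^sup>2 * u / 2 + H u) \<longlongrightarrow> b) (at_right 0)" by simp
  then have "\<forall>\<^sub>F u in at_right 0. b + \<sigma>\<^sup>2 * u / 2 + H u < b/2"
    using assms(2) by (intro order_tendstoD) auto
  then obtain c where c: "c > 0" "\<And>y. 0 < y \<Longrightarrow> y < c \<Longrightarrow> b + \<sigma>\<^sup>2 * y / 2 + H y < b/2"
    unfolding eventually_at_right_field by auto
  show ?thesis
  proof (intro exI[of _ "min (c/2) 1"] conjI allI impI)
    fix u assume u: "0 < u \<and> u \<le> min (c/2) 1"
    then have "Psi b \<sigma> \<pi> u / u < b/2" using eq[of u] c(2)[of u] c(1) by auto
    then show "Psi b \<sigma> \<pi> u \<le> b / 2 * u" using u by (simp add: divide_simps)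
  qed (use c in auto)
qed


locale odeloc =
  fixes Ps Ph :: "real \<Rightarrow> real" and v :: "real \<Rightarrow> real \<Rightarrow> real" and d0 k :: real
  assumes d0: "0 < d0" "d0 \<le> 1" and k: "k > 0"
    and Ps0: "Ps 0 = 0"
    and Psk: "\<And>u. 0 < u \<Longrightarrow> u \<le> d0 \<Longrightarrow> Ps u \<le> - k * u"
    and Pscont: "continuous_on {0..1} Ps"
    and Phcont: "\<And>Q. continuous_on {0..Q} Ph"
    and Phmono: "\<And>p q. 0 \<le> p \<Longrightarrow> p \<le> q \<Longrightarrow> Ph p \<le> Ph q"
    and Phpos: "\<And>q. 0 < q \<Longrightarrow> Ph q > 0"
    and Ph0: "Ph 0 = 0"
    and sv: "solves_v Ps v"
begin

lemma Psle0: "0 \<le> u \<Longrightarrow> u \<le> d0 \<Longrightarrow> Ps u \<le> 0"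
  using Psk[of u] Ps0 k by (cases "u = 0") (auto intro: order_trans[of _ "- k * u"] simp: mult_nonneg_nonneg)

lemma Phnn: "0 \<le> q \<Longrightarrow> 0 \<le> Ph q"
  using Phpos[of q] Ph0 by (cases "q = 0") auto

lemma v0: "l \<ge> 0 \<Longrightarrow> v 0 l = l" using sv unfolding solves_v_def by auto
lemma vnn: "l \<ge> 0 \<Longrightarrow> t \<ge> 0 \<Longrightarrow> v t l \<ge> 0" using sv unfolding solves_v_def by auto
lemma vderiv: "l \<ge> 0 \<Longrightarrow> t \<ge> 0 \<Longrightarrow> ((\<lambda>s. v s l) has_real_derivative (- Ps (v t l))) (at t within {0..})"
  using sv unfolding solves_v_def by auto

lemma vcont: "l \<ge> 0 \<Longrightarrow> continuous_on {0..} (\<lambda>s. v s l)"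
  by (rule DERIV_continuous_on[OF vderiv]) auto

lemma vderiv_at: "l \<ge> 0 \<Longrightarrow> t > 0 \<Longrightarrow> ((\<lambda>s. v s l) has_real_derivative (- Ps (v t l))) (at t)"
  using vderiv[of l t] at_within_interior[of t "{0..}"] by auto

lemma nondecr:
  assumes l: "l \<ge> 0" and s: "0 \<le> s" "s < T" and P: "\<And>\<xi>. s < \<xi> \<Longrightarrow> \<xi> < T \<Longrightarrow> Ps (v \<xi> l) \<le> 0"
  shows "v s l \<le> v T l"
proof -
  have "continuous_on {s..T} (\<lambda>r. v r l)" using vcont[OF l] by (rule continuous_on_subset) (use s in auto)
  moreover have "(\<lambda>r. v r l) differentiable (at x)" if "s < x" "x < T" for x
    using vderiv_at[OF l, of x] that s real_differentiable_def by force
  ultimately obtain D z where z: "s < z" "z < T" "DERIV (\<lambda>r. v r l) z :> D" "v T l - v s l = (T - s) * D"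
    using MVT[OF s(2)] by blast
  have "D = - Ps (v z l)" using DERIV_unique[OF z(3) vderiv_at[OF l, of z]] z s by auto
  then have "D \<ge> 0" using P[OF z(1,2)] by simp
  then have "(T - s) * D \<ge> 0" using s by simp
  then show ?thesis using z(4) by linarith
qed

lemma lasttime:
  assumes l: "l \<ge> 0" and r0: "0 \<le> r0" "r0 \<le> T" and th: "\<theta> \<le> v r0 l" "v T l < \<theta>"
    and P: "\<And>u. 0 \<le> u \<Longrightarrow> u < \<theta> \<Longrightarrow> Ps u \<le> 0"
  shows False
proof -
  define S where "S = {r0..T} \<inter> (\<lambda>r. v r l) -` {\<theta>..}"
  have "continuous_on {r0..T} (\<lambda>r. v r l)" using vcont[OF l] by (rule continuous_on_subset) (use r0 in auto)
  then have "closed S" unfolding S_def by (intro continuous_closed_preimage) auto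
  then have "compact S" unfolding S_def unfolding compact_eq_bounded_closed by (auto intro: bounded_subset[of "{r0..T}"])
  moreover have "r0 \<in> S" using r0 th unfolding S_def by auto
  ultimately obtain s where s: "s \<in> S" "\<And>y. y \<in> S \<Longrightarrow> y \<le> s"
    using compact_attains_sup[of S] by blast
  have sT: "s \<noteq> T" using s(1) th unfolding S_def by auto
  then have sT': "s < T" "0 \<le> s" using s(1) r0 unfolding S_def by auto
  have "v s l \<le> v T l"
  proof (rule nondecr[OF l sT'(2) sT'(1)])
    fix \<xi> assume \<xi>: "s < \<xi>" "\<xi> < T"
    then have "\<xi> \<notin> S" using s(2)[of \<xi>] by auto
    then have "v \<xi> l < \<theta>" using \<xi> sT' s(1) unfolding S_def by auto
    then show "Ps (v \<xi> l) \<le> 0" using P vnn[OF l, of \<xi>] \<xi> sT' by auto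
  qed
  then show False using s(1) th unfolding S_def by auto
qed

lemma ge_init: assumes "0 < a" "a \<le> d0" "r \<ge> 0" shows "a \<le> v r a"
proof (rule ccontr)
  assume "\<not> a \<le> v r a"
  then show False
    using lasttime[of a 0 r a] assms v0[of a] Psle0 by fastforce
qed

lemma below: assumes "0 < a" "a \<le> d0" "T \<ge> 0" "v T a < d0" "r \<in> {0..T}" shows "v r a < d0"
proof (rule ccontr)
  assume "\<not> v r a < d0"
  then show False
    using lasttime[of a r T d0] assms Psle0 by fastforce
qed

lemma mono_path: assumes "0 < a" "a \<le> d0" "T \<ge> 0" "v T a < d0" "r \<in> {0..T}" shows "v r a \<le> v T a"
proof (cases "r = T")
  case False
  then show ?thesis
  proof (intro nondecr)
    fix \<xi> assume "r < \<xi>" "\<xi> < T"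
    then show "Ps (v \<xi> a) \<le> 0" using below[OF assms(1-4), of \<xi>] Psle0 vnn[of a \<xi>] assms by auto
  qed (use assms in auto)
qed simp

end

context odeloc begin

definition gg :: "real \<Rightarrow> real" where "gg u = Ph u / (- Ps u)"
definition hh :: "real \<Rightarrow> real" where "hh u = 1 / (- Ps u)"

lemma Psneg: "0 < u \<Longrightarrow> u \<le> d0 \<Longrightarrow> Ps u < 0"
proof -
  assume "0 < u" "u \<le> d0"
  moreover have "k * u > 0" using k \<open>0 < u\<close> by simp
  ultimately show ?thesis using Psk[of u] by linarith
qed

lemma cont_gh: assumes "0 < c" "d' \<le> d0" shows "continuous_on {c..d'} gg" "continuous_on {c..d'} hh"
proof -
  have P: "continuous_on {c..d'} Ps" using Pscont by (rule continuous_on_subset) (use assms d0 in auto)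
  have Q: "continuous_on {c..d'} Ph" using Phcont[of d'] by (rule continuous_on_subset) (use assms in auto)
  have nz: "\<forall>u\<in>{c..d'}. - Ps u \<noteq> 0"
  proof
    fix u assume "u \<in> {c..d'}"
    then have "Ps u < 0" using Psneg[of u] assms by auto
    then show "- Ps u \<noteq> 0" by simp
  qed
  show "continuous_on {c..d'} gg" unfolding gg_def using P Q nz by (auto intro!: continuous_intros)
  show "continuous_on {c..d'} hh" unfolding hh_def using P nz by (auto intro!: continuous_intros)
qed

lemma path_max:
  assumes "l \<ge> 0" "T \<ge> 0"
  obtains rm where "rm \<in> {0..T}" "\<And>r. r \<in> {0..T} \<Longrightarrow> v r l \<le> v rm l"
proof -
  have "continuous_on {0..T} (\<lambda>r. v r l)" using vcont[OF assms(1)] by (rule continuous_on_subset) auto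
  then have "compact ((\<lambda>r. v r l) ` {0..T})" by (rule compact_continuous_image) simp
  then obtain m where "m \<in> (\<lambda>r. v r l) ` {0..T}" "\<And>y. y \<in> (\<lambda>r. v r l) ` {0..T} \<Longrightarrow> y \<le> m"
    using compact_attains_sup[of "(\<lambda>r. v r l) ` {0..T}"] assms by auto
  then show ?thesis using that by auto
qed

lemma phv_int: assumes "l \<ge> 0" "T \<ge> 0" shows "(\<lambda>r. Ph (v r l)) integrable_on {0..T}"
proof -
  obtain rm where rm: "rm \<in> {0..T}" "\<And>r. r \<in> {0..T} \<Longrightarrow> v r l \<le> v rm l" using path_max assms by blast
  have "continuous_on {0..T} (\<lambda>r. v r l)" using vcont[OF assms(1)] by (rule continuous_on_subset) auto
  then have "continuous_on {0..T} (\<lambda>r. Ph (v r l))"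
    by (rule continuous_on_compose2[OF Phcont[of "v rm l"]]) (use rm vnn assms in auto)
  then show ?thesis by (rule integrable_continuous_real)
qed

lemma ftc_gen:
  fixes f :: "real \<Rightarrow> real"
  assumes c: "0 < c" "c \<le> l" and T: "T \<ge> 0"
    and path: "\<And>r. r \<in> {0..T} \<Longrightarrow> c \<le> v r l \<and> v r l < d0"
    and fc: "\<And>d'. d' \<le> d0 \<Longrightarrow> continuous_on {c..d'} f"
  shows "((\<lambda>r. f (v r l) * (- Ps (v r l))) has_integral (integral {c..v T l} f - integral {c..l} f)) {0..T}"
proof -
  have l: "l \<ge> 0" using c by simp
  obtain rm where rm: "rm \<in> {0..T}" "\<And>r. r \<in> {0..T} \<Longrightarrow> v r l \<le> v rm l" using path_max l T by blast
  define d' where "d' = v rm l"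
  have d': "d' < d0" "c \<le> d'" using path[OF rm(1)] unfolding d'_def by auto
  define F where "F y = integral {c..y} f" for y
  have Fd: "(F has_field_derivative f y) (at y within {c..d'})" if "y \<in> {c..d'}" for y
    unfolding F_def has_real_derivative_iff_has_vector_derivative
    by (rule integral_has_vector_derivative[OF fc that]) (use d' in simp)
  have img: "(\<lambda>r. v r l) ` {0..T} \<subseteq> {c..d'}" using path rm(2) unfolding d'_def by auto
  have "((\<lambda>r. F (v r l)) has_vector_derivative (f (v r l) * (- Ps (v r l)))) (at r within {0..T})"
    if r: "r \<in> {0..T}" for r
  proof -
    have a: "(F has_field_derivative f (v r l)) (at (v r l) within ((\<lambda>r. v r l) ` {0..T}))"
    proof (rule has_field_derivative_subset[OF Fd img])
      show "v r l \<in> {c..d'}" using img r by blast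
    qed
    have b: "((\<lambda>r. v r l) has_field_derivative (- Ps (v r l))) (at r within {0..T})"
      using vderiv[OF l, of r] r by (auto intro: has_field_derivative_subset)
    show ?thesis using DERIV_image_chain[OF a b]
      unfolding has_real_derivative_iff_has_vector_derivative comp_def .
  qed
  from fundamental_theorem_of_calculus[OF T this]
  show ?thesis unfolding F_def using v0[OF l] by simp
qed

lemma ftc_Ph:
  assumes c: "0 < c" "c \<le> l" and T: "T \<ge> 0"
    and path: "\<And>r. r \<in> {0..T} \<Longrightarrow> c \<le> v r l \<and> v r l < d0"
  shows "integral {0..T} (\<lambda>r. Ph (v r l)) = integral {c..v T l} gg - integral {c..l} gg"
proof -
  have "((\<lambda>r. gg (v r l) * (- Ps (v r l))) has_integral (integral {c..v T l} gg - integral {c..l} gg)) {0..T}"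
    by (rule ftc_gen[OF c T path cont_gh(1)[OF c(1)]])
  moreover have "gg (v r l) * (- Ps (v r l)) = Ph (v r l)" if "r \<in> {0..T}" for r
    using Psneg[of "v r l"] path[OF that] c unfolding gg_def by auto
  ultimately have "((\<lambda>r. Ph (v r l)) has_integral (integral {c..v T l} gg - integral {c..l} gg)) {0..T}"
    by (subst has_integral_cong[where g = "\<lambda>r. gg (v r l) * (- Ps (v r l))"]) auto
  then show ?thesis by (rule integral_unique)
qed

lemma ftc_T:
  assumes c: "0 < c" "c \<le> l" and T: "T \<ge> 0"
    and path: "\<And>r. r \<in> {0..T} \<Longrightarrow> c \<le> v r l \<and> v r l < d0"
  shows "T = integral {c..v T l} hh - integral {c..l} hh"
proof -
  have "((\<lambda>r. hh (v r l) * (- Ps (v r l))) has_integral (integral {c..v T l} hh - integral {c..l} hh)) {0..T}"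
    by (rule ftc_gen[OF c T path cont_gh(2)[OF c(1)]])
  moreover have "hh (v r l) * (- Ps (v r l)) = 1" if "r \<in> {0..T}" for r
    using Psneg[of "v r l"] path[OF that] c unfolding hh_def by auto
  ultimately have "((\<lambda>r. 1) has_integral (integral {c..v T l} hh - integral {c..l} hh)) {0..T}"
    by (subst has_integral_cong[where g = "\<lambda>r. hh (v r l) * (- Ps (v r l))"]) auto
  moreover have "((\<lambda>r. 1::real) has_integral T) {0..T}" using has_integral_const_real[of "1::real" 0 T] T by simp
  ultimately show ?thesis using has_integral_unique by blast
qed

end

context odeloc begin

lemma gg_nn: "0 < u \<Longrightarrow> u \<le> d0 \<Longrightarrow> gg u \<ge> 0"
proof -
  assume "0 < u" "u \<le> d0"
  then have "- Ps u > 0" "Ph u \<ge> 0" using Psneg[of u] Phnn[of u] by auto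
  then show ?thesis unfolding gg_def by (rule divide_nonneg_pos[rotated])
qed

lemma hh_nn: "0 < u \<Longrightarrow> u \<le> d0 \<Longrightarrow> hh u \<ge> 0"
  unfolding hh_def using Psneg[of u] by auto

lemma int_gh: assumes "0 < c" "d' \<le> d0" shows "gg integrable_on {c..d'}" "hh integrable_on {c..d'}"
  using cont_gh[OF assms] by (auto intro: integrable_continuous_real)

lemma hit:
  assumes a: "0 < a" "a \<le> \<epsilon>" "\<epsilon> < d0" and T: "T \<ge> 0" and vT: "\<epsilon> \<le> v T a"
  shows "integral {a..\<epsilon>} gg \<le> integral {0..T} (\<lambda>r. Ph (v r a))"
proof -
  have l: "a \<ge> 0" using a by simp
  define S where "S = {0..T} \<inter> (\<lambda>r. v r a) -` {\<epsilon>..}"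
  have cT: "continuous_on {0..T} (\<lambda>r. v r a)" using vcont[OF l] by (rule continuous_on_subset) auto
  then have "closed S" unfolding S_def by (intro continuous_closed_preimage) auto
  then have "compact S" unfolding S_def compact_eq_bounded_closed by (auto intro: bounded_subset[of "{0..T}"])
  moreover have "T \<in> S" using T vT unfolding S_def by auto
  ultimately obtain rs where rs: "rs \<in> S" "\<And>y. y \<in> S \<Longrightarrow> rs \<le> y"
    using compact_attains_inf[of S] by blast
  have rs': "0 \<le> rs" "rs \<le> T" "\<epsilon> \<le> v rs a" using rs(1) unfolding S_def by auto
  have "continuous_on {0..rs} (\<lambda>r. v r a)" using cT by (rule continuous_on_subset) (use rs' in auto)
  then obtain r' where r': "0 \<le> r'" "r' \<le> rs" "v r' a = \<epsilon>"
    using IVT'[of "\<lambda>r. v r a" 0 \<epsilon> rs] rs' v0[OF l] a by auto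
  have path: "a \<le> v r a \<and> v r a < d0" if "r \<in> {0..r'}" for r
  proof
    show "a \<le> v r a" using ge_init[of a r] a that by auto
    show "v r a < d0"
    proof (cases "r < rs")
      case True
      then have "r \<notin> S" using rs(2)[of r] by auto
      then show ?thesis using that r' rs' a unfolding S_def by auto
    next
      case False
      then have "r = r'" using that r' by auto
      then show ?thesis using r' a by auto
    qed
  qed
  have "integral {0..r'} (\<lambda>r. Ph (v r a)) = integral {a..v r' a} gg - integral {a..a} gg"
    by (rule ftc_Ph[OF a(1) order_refl r'(1) path])
  then have eq: "integral {0..r'} (\<lambda>r. Ph (v r a)) = integral {a..\<epsilon>} gg" using r' by simp
  have "integral {0..r'} (\<lambda>r. Ph (v r a)) \<le> integral {0..T} (\<lambda>r. Ph (v r a))"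
  proof (rule integral_subset_le)
    show "{0..r'} \<subseteq> {0..T}" using r' rs' by auto
    show "(\<lambda>r. Ph (v r a)) integrable_on {0..r'}" "(\<lambda>r. Ph (v r a)) integrable_on {0..T}"
      using phv_int[OF l] r' T by auto
    show "\<forall>x\<in>{0..T}. 0 \<le> Ph (v x a)" using Phnn vnn[OF l] by auto
  qed
  then show ?thesis using eq by simp
qed

lemma lb:
  assumes "0 < \<delta>" "\<delta> \<le> d0" "T \<ge> 0"
  shows "T * Ph \<delta> \<le> integral {0..T} (\<lambda>r. Ph (v r \<delta>))"
proof -
  have "integral {0..T} (\<lambda>r. Ph \<delta>) \<le> integral {0..T} (\<lambda>r. Ph (v r \<delta>))"
  proof (rule integral_le)
    show "(\<lambda>r. Ph (v r \<delta>)) integrable_on {0..T}" using phv_int assms by auto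
    show "Ph \<delta> \<le> Ph (v x \<delta>)" if "x \<in> {0..T}" for x using ge_init[of \<delta> x] that assms Phmono by auto
  qed auto
  then show ?thesis using assms by (simp add: mult.commute)
qed

definition ff :: "real \<Rightarrow> real \<Rightarrow> real \<Rightarrow> real" where
  "ff x t a = x * v t a + integral {0..t} (\<lambda>r. Ph (v r a))"

lemma ff_ge: "x \<ge> 0 \<Longrightarrow> a \<ge> 0 \<Longrightarrow> t \<ge> 0 \<Longrightarrow> integral {0..t} (\<lambda>r. Ph (v r a)) \<le> ff x t a"
  unfolding ff_def using vnn[of a t] by (simp add: mult_nonneg_nonneg)

lemma GHb:
  assumes "0 < c" "c \<le> z" "z \<le> y" "y \<le> d0"
  shows "integral {c..y} gg - integral {c..z} gg = integral {z..y} gg"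
    "integral {c..y} hh - integral {c..z} hh = integral {z..y} hh"
    "0 \<le> integral {z..y} gg" "integral {z..y} gg \<le> Ph y * integral {z..y} hh"
proof -
  show "integral {c..y} gg - integral {c..z} gg = integral {z..y} gg"
    using Henstock_Kurzweil_Integration.integral_combine[OF assms(2,3) int_gh(1)[OF assms(1,4)]] by simp
  show "integral {c..y} hh - integral {c..z} hh = integral {z..y} hh"
    using Henstock_Kurzweil_Integration.integral_combine[OF assms(2,3) int_gh(2)[OF assms(1,4)]] by simp
  have zp: "0 < z" using assms by simp
  show "0 \<le> integral {z..y} gg"
    by (rule integral_nonneg[OF int_gh(1)[OF zp assms(4)]]) (use gg_nn assms in auto)
  have "integral {z..y} gg \<le> integral {z..y} (\<lambda>u. Ph y * hh u)"
  proof (rule integral_le)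
    show "gg integrable_on {z..y}" using int_gh(1)[OF zp assms(4)] .
    show "(\<lambda>u. Ph y * hh u) integrable_on {z..y}" using int_gh(2)[OF zp assms(4)] by (rule integrable_on_mult_right)
    show "gg u \<le> Ph y * hh u" if u: "u \<in> {z..y}" for u
    proof -
      have "gg u = Ph u * hh u" unfolding gg_def hh_def by simp
      also have "\<dots> \<le> Ph y * hh u" using u assms hh_nn[of u] Phmono[of u y] by (intro mult_right_mono) auto
      finally show "gg u \<le> Ph y * hh u" .
    qed
  qed
  then show "integral {z..y} gg \<le> Ph y * integral {z..y} hh" by simp
qed

lemma H2a:
  assumes "0 < a" "2 * a \<le> d0"
  shows "integral {a..2*a} hh \<le> 1 / k" "0 \<le> integral {a..2*a} hh"
proof -
  have "integral {a..2*a} hh \<le> integral {a..2*a} (\<lambda>u. 1 / (k * a))"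
  proof (rule integral_le)
    show "hh integrable_on {a..2*a}" using int_gh(2) assms by auto
    show "hh u \<le> 1 / (k * a)" if u: "u \<in> {a..2*a}" for u
    proof -
      have "k * a \<le> k * u" using u k by (intro mult_left_mono) auto
      also have "\<dots> \<le> - Ps u" using Psk[of u] u assms by auto
      finally have ka: "k * a \<le> - Ps u" .
      have p1: "0 < k * a" using k assms by simp
      have p2: "0 < - Ps u" using Psneg[of u] u assms by auto
      have "0 < (- Ps u) * (k * a)" using p2 p1 by (rule mult_pos_pos)
      then show "hh u \<le> 1 / (k * a)" unfolding hh_def using ka by (intro divide_left_mono) auto
    qed
  qed auto
  also have "\<dots> = 1 / k" using assms k by simp
  finally show "integral {a..2*a} hh \<le> 1 / k" .
  show "0 \<le> integral {a..2*a} hh"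
    by (rule integral_nonneg[OF int_gh(2)]) (use hh_nn assms in auto)
qed

end

context odeloc begin

lemma diffbound:
  assumes a: "0 < a" "2 * a \<le> d0" and T: "T \<ge> 0" and v1: "v T a < d0" and v2: "v T (2*a) < d0"
  shows "\<bar>integral {0..T} (\<lambda>r. Ph (v r (2*a))) - integral {0..T} (\<lambda>r. Ph (v r a))\<bar>
           \<le> (Ph (max (v T a) (v T (2*a))) + Ph (2*a)) / k"
proof -
  have a': "a \<le> d0" "0 < 2*a" "a \<le> 2*a" using a by auto
  have p1: "a \<le> v r a \<and> v r a < d0" if "r \<in> {0..T}" for r
    using ge_init[of a r] below[of a T r] a' T v1 a that by auto
  have p2: "a \<le> v r (2*a) \<and> v r (2*a) < d0" if "r \<in> {0..T}" for r
    using ge_init[of "2*a" r] below[of "2*a" T r] a T v2 that by auto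
  define G where "G y = integral {a..y} gg" for y
  define H where "H y = integral {a..y} hh" for y
  have I1: "integral {0..T} (\<lambda>r. Ph (v r a)) = G (v T a)"
    using ftc_Ph[OF a(1) order_refl T p1] unfolding G_def by simp
  have I2: "integral {0..T} (\<lambda>r. Ph (v r (2*a))) = G (v T (2*a)) - G (2*a)"
    using ftc_Ph[OF a(1) a'(3) T p2] unfolding G_def by simp
  have T1: "T = H (v T a)" using ftc_T[OF a(1) order_refl T p1] unfolding H_def by simp
  have T2: "T = H (v T (2*a)) - H (2*a)" using ftc_T[OF a(1) a'(3) T p2] unfolding H_def by simp
  define y1 where "y1 = v T a"
  define y2 where "y2 = v T (2*a)"
  have y: "a \<le> y1" "y1 < d0" "a \<le> y2" "y2 < d0" using p1[of T] p2[of T] T unfolding y1_def y2_def by auto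
  have key: "\<bar>G y2 - G y1\<bar> \<le> Ph (max y1 y2) * \<bar>H y2 - H y1\<bar>"
  proof (cases "y1 \<le> y2")
    case True
    note g = GHb[OF a(1) y(1) True less_imp_le[OF y(4)]]
    have "0 \<le> integral {y1..y2} hh" by (rule integral_nonneg[OF int_gh(2)]) (use hh_nn y a in auto)
    then show ?thesis using g True unfolding G_def H_def by (simp add: max_def)
  next
    case False
    then have F: "y2 \<le> y1" by simp
    note g = GHb[OF a(1) y(3) F less_imp_le[OF y(2)]]
    have "0 \<le> integral {y2..y1} hh" by (rule integral_nonneg[OF int_gh(2)]) (use hh_nn y a in auto)
    then show ?thesis using g F unfolding G_def H_def by (simp add: max_def abs_minus_commute)
  qed
  have Hd: "H y2 - H y1 = H (2*a)" using T1 T2 unfolding y1_def y2_def by simp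
  have H2: "0 \<le> H (2*a)" "H (2*a) \<le> 1/k" using H2a[OF a] unfolding H_def by auto
  note g2 = GHb[OF a(1) order_refl a'(3) a(2)]
  have G2: "0 \<le> G (2*a)" "G (2*a) \<le> Ph (2*a) * H (2*a)" using g2 unfolding G_def H_def by auto
  have Pm: "0 \<le> Ph (max y1 y2)" "0 \<le> Ph (2*a)" using Phnn y a by auto
  have "\<bar>(G y2 - G (2*a)) - G y1\<bar> \<le> \<bar>G y2 - G y1\<bar> + G (2*a)" using G2 by linarith
  also have "\<dots> \<le> Ph (max y1 y2) * H (2*a) + Ph (2*a) * H (2*a)" using key Hd G2 H2 by simp
  also have "\<dots> = (Ph (max y1 y2) + Ph (2*a)) * H (2*a)" by (simp add: algebra_simps)
  also have "\<dots> \<le> (Ph (max y1 y2) + Ph (2*a)) * (1/k)" using H2 Pm by (intro mult_left_mono) auto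
  finally show ?thesis using I1 I2 unfolding y1_def y2_def by simp
qed

lemma seqA:
  fixes a :: "nat \<Rightarrow> real"
  assumes x: "x \<ge> 0" and a: "\<And>n. a n \<ge> 0"
    and K: "eventually (\<lambda>n. ff x (real n) (a n) \<le> K) sequentially"
    and mono: "\<And>n p q. 0 \<le> p \<Longrightarrow> p \<le> q \<Longrightarrow> ff x (real n) p \<le> ff x (real n) q"
  shows "a \<longlonglongrightarrow> 0"
proof (rule ccontr)
  assume "\<not> a \<longlonglongrightarrow> 0"
  then obtain e where e: "e > 0" "\<And>N. \<exists>n\<ge>N. \<not> \<bar>a n\<bar> < e"
    unfolding LIMSEQ_iff by auto
  define \<delta> where "\<delta> = min e d0"
  have \<delta>: "0 < \<delta>" "\<delta> \<le> d0" "\<delta> \<le> e" using e d0 unfolding \<delta>_def by auto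
  have Pd: "Ph \<delta> > 0" using Phpos \<delta> by auto
  obtain N1 where N1: "\<And>n. n \<ge> N1 \<Longrightarrow> ff x (real n) (a n) \<le> K" using K unfolding eventually_sequentially by auto
  obtain N2 where N2: "K < real N2 * Ph \<delta>" using ex_less_of_nat_mult[OF Pd] by auto
  obtain n where n: "n \<ge> max N1 N2" "\<not> \<bar>a n\<bar> < e" using e(2) by blast
  have an: "\<delta> \<le> a n" using n(2) a[of n] \<delta> by auto
  have "real N2 * Ph \<delta> \<le> real n * Ph \<delta>" using n Pd by (intro mult_right_mono) auto
  also have "\<dots> \<le> integral {0..real n} (\<lambda>r. Ph (v r \<delta>))" using lb[OF \<delta>(1,2)] by simp
  also have "\<dots> \<le> ff x (real n) \<delta>" using ff_ge[OF x] \<delta> by simp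
  also have "\<dots> \<le> ff x (real n) (a n)" using mono an \<delta> by simp
  also have "\<dots> \<le> K" using N1 n by simp
  finally show False using N2 by simp
qed

lemma seqC:
  fixes a :: "nat \<Rightarrow> real"
  assumes x: "x \<ge> 0" and a: "\<And>n. a n > 0" and alim: "a \<longlonglongrightarrow> 0"
    and v1: "(\<lambda>n. v (real n) (a n)) \<longlonglongrightarrow> 0" and v2: "(\<lambda>n. v (real n) (2 * a n)) \<longlonglongrightarrow> 0"
  shows "(\<lambda>n. ff x (real n) (2 * a n) - ff x (real n) (a n)) \<longlonglongrightarrow> 0"
proof (rule Lim_null_comparison)
  define B where "B n = x * (\<bar>v (real n) (2 * a n)\<bar> + \<bar>v (real n) (a n)\<bar>)
     + (Ph (max (v (real n) (a n)) (v (real n) (2 * a n))) + Ph (2 * a n)) / k" for n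
  have e1: "eventually (\<lambda>n. 2 * a n < d0) sequentially"
    using tendsto_mult[OF tendsto_const[of 2] alim] d0 by (intro order_tendstoD) auto
  have e2: "eventually (\<lambda>n. v (real n) (a n) < d0) sequentially" using v1 d0 by (intro order_tendstoD) auto
  have e3: "eventually (\<lambda>n. v (real n) (2 * a n) < d0) sequentially" using v2 d0 by (intro order_tendstoD) auto
  show "eventually (\<lambda>n. norm (ff x (real n) (2 * a n) - ff x (real n) (a n)) \<le> B n) sequentially"
    using e1 e2 e3
  proof eventually_elim
    case (elim n)
    have db: "\<bar>integral {0..real n} (\<lambda>r. Ph (v r (2 * a n))) - integral {0..real n} (\<lambda>r. Ph (v r (a n)))\<bar>
       \<le> (Ph (max (v (real n) (a n)) (v (real n) (2 * a n))) + Ph (2 * a n)) / k"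
      using diffbound[OF a[of n] _ _ elim(2,3)] elim(1) by simp
    have "\<bar>x * v (real n) (2 * a n) - x * v (real n) (a n)\<bar> \<le> x * (\<bar>v (real n) (2 * a n)\<bar> + \<bar>v (real n) (a n)\<bar>)"
      using x by (simp add: abs_mult right_diff_distrib[symmetric] abs_triangle_ineq4 mult_left_mono)
    then show ?case using db unfolding ff_def B_def by simp
  qed
  have c0: "continuous_on {0..1} Ph" using Phcont by simp
  have m0: "(\<lambda>n. max (v (real n) (a n)) (v (real n) (2 * a n))) \<longlonglongrightarrow> max 0 0"
    by (intro tendsto_max v1 v2)
  have t1: "(\<lambda>n. Ph (max (v (real n) (a n)) (v (real n) (2 * a n)))) \<longlonglongrightarrow> Ph 0"
  proof (rule continuous_on_tendsto_compose[OF c0])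
    show "(\<lambda>n. max (v (real n) (a n)) (v (real n) (2 * a n))) \<longlonglongrightarrow> 0" using m0 by simp
    have "eventually (\<lambda>n. v (real n) (a n) < 1) sequentially" using v1 by (intro order_tendstoD) auto
    moreover have "eventually (\<lambda>n. v (real n) (2 * a n) < 1) sequentially" using v2 by (intro order_tendstoD) auto
    ultimately show "eventually (\<lambda>n. max (v (real n) (a n)) (v (real n) (2 * a n)) \<in> {0..1}) sequentially"
    proof eventually_elim
      case (elim n)
      then show ?case using vnn[of "a n" "real n"] vnn[of "2 * a n" "real n"] a[of n] by auto
    qed
  qed simp
  have t2: "(\<lambda>n. Ph (2 * a n)) \<longlonglongrightarrow> Ph 0"
  proof (rule continuous_on_tendsto_compose[OF c0])
    show l2: "(\<lambda>n. 2 * a n) \<longlonglongrightarrow> 0" using tendsto_mult[OF tendsto_const[of 2] alim] by simp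
    have "eventually (\<lambda>n. 2 * a n < 1) sequentially"
      using order_tendstoD(2)[OF l2, of 1] by simp
    then show "eventually (\<lambda>n. 2 * a n \<in> {0..1}) sequentially"
      by eventually_elim (use a in \<open>auto intro: less_imp_le\<close>)
  qed simp
  have "B \<longlonglongrightarrow> x * (\<bar>0\<bar> + \<bar>0\<bar>) + (Ph 0 + Ph 0) / k"
    unfolding B_def using k by (intro tendsto_intros v1 v2 t1 t2) auto
  then show "B \<longlonglongrightarrow> 0" using Ph0 by simp
qed

end

context odeloc begin

lemma seqB:
  fixes a :: "nat \<Rightarrow> real"
  assumes x: "x \<ge> 0" and a: "\<And>n. a n > 0" and alim: "a \<longlonglongrightarrow> 0"
    and K: "eventually (\<lambda>n. ff x (real n) (a n) \<le> K) sequentially"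
    and div: "\<And>\<epsilon>. \<epsilon> > 0 \<Longrightarrow> (\<integral>\<^sup>+ u\<in>{0<..\<epsilon>}. ennreal (Ph u / \<bar>Ps u\<bar>) \<partial>lborel) = \<infinity>"
  shows "(\<lambda>n. v (real n) (a n)) \<longlonglongrightarrow> 0"
proof (rule ccontr)
  assume "\<not> (\<lambda>n. v (real n) (a n)) \<longlonglongrightarrow> 0"
  then obtain e where e: "e > 0" "\<And>N. \<exists>n\<ge>N. \<not> \<bar>v (real n) (a n)\<bar> < e"
    unfolding LIMSEQ_iff by auto
  define \<epsilon> where "\<epsilon> = min e (d0/2)"
  have \<epsilon>: "0 < \<epsilon>" "\<epsilon> < d0" "\<epsilon> \<le> e" using e d0 unfolding \<epsilon>_def by auto
  have bnd: "integral {h..\<epsilon>} gg \<le> K" if h: "0 < h" "h \<le> \<epsilon>" for h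
  proof -
    obtain N1 where N1: "\<And>n. n \<ge> N1 \<Longrightarrow> ff x (real n) (a n) \<le> K" using K unfolding eventually_sequentially by auto
    obtain N2 where N2: "\<And>n. n \<ge> N2 \<Longrightarrow> \<bar>a n - 0\<bar> < h" using alim h(1) unfolding LIMSEQ_iff by force
    obtain n where n: "n \<ge> max N1 N2" "\<not> \<bar>v (real n) (a n)\<bar> < e" using e(2) by blast
    have an: "a n < h" "0 < a n" using N2[of n] n a[of n] by auto
    have vn: "\<epsilon> \<le> v (real n) (a n)" using n(2) \<epsilon> vnn[of "a n" "real n"] an by auto
    have "integral {a n..\<epsilon>} gg \<le> integral {0..real n} (\<lambda>r. Ph (v r (a n)))"
      by (rule hit) (use an h \<epsilon> vn in auto)
    also have "\<dots> \<le> ff x (real n) (a n)" using ff_ge[OF x] an by simp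
    also have "\<dots> \<le> K" using N1 n by simp
    finally have 1: "integral {a n..\<epsilon>} gg \<le> K" .
    have "integral {h..\<epsilon>} gg \<le> integral {a n..\<epsilon>} gg"
    proof (rule integral_subset_le)
      show "{h..\<epsilon>} \<subseteq> {a n..\<epsilon>}" using an by auto
      show "gg integrable_on {h..\<epsilon>}" using int_gh(1)[of h \<epsilon>] h \<epsilon> by auto
      show "gg integrable_on {a n..\<epsilon>}" using int_gh(1)[of "a n" \<epsilon>] an \<epsilon> by auto
      show "\<forall>u\<in>{a n..\<epsilon>}. 0 \<le> gg u" using gg_nn an \<epsilon> by auto
    qed
    then show ?thesis using 1 by simp
  qed
  define f where "f j u = ennreal (indicator {\<epsilon> / real (Suc j)..\<epsilon>} u * gg u)" for j u
  have hj: "0 < \<epsilon> / real (Suc j)" "\<epsilon> / real (Suc j) \<le> \<epsilon>" for j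
    using \<epsilon> by (auto simp: divide_simps)
  have fint: "integral\<^sup>N lborel (f j) \<le> ennreal K" for j
  proof -
    have "integral\<^sup>N lborel (f j) = integral {\<epsilon> / real (Suc j)..\<epsilon>} gg"
      unfolding f_def
    proof (rule nn_integral_has_integral_lebesgue)
      show "0 \<le> gg u" if "u \<in> {\<epsilon> / real (Suc j)..\<epsilon>}" for u
      proof -
        have "0 < u" using that hj(1)[of j] by (auto intro: less_le_trans)
        moreover have "u \<le> d0" using that \<epsilon> by auto
        ultimately show ?thesis by (rule gg_nn)
      qed
      show "(gg has_integral integral {\<epsilon> / real (Suc j)..\<epsilon>} gg) {\<epsilon> / real (Suc j)..\<epsilon>}"
        using int_gh(1)[of "\<epsilon> / real (Suc j)" \<epsilon>] hj[of j] \<epsilon> by (auto intro: integrable_integral)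
    qed
    then show ?thesis using bnd[OF hj[of j]] by (simp add: ennreal_leI)
  qed
  have inc: "incseq f"
  proof (rule incseq_SucI, rule le_funI)
    fix j u
    have "\<epsilon> / real (Suc (Suc j)) \<le> \<epsilon> / real (Suc j)" using \<epsilon> by (intro divide_left_mono) auto
    then show "f j u \<le> f (Suc j) u" unfolding f_def
      using gg_nn[of u] hj \<epsilon> by (auto split: split_indicator intro!: ennreal_leI)
  qed
  have meas: "f j \<in> borel_measurable lborel" for j
  proof -
    have "(\<lambda>u. indicator {\<epsilon> / real (Suc j)..\<epsilon>} u *\<^sub>R gg u) \<in> borel_measurable borel"
      by (rule borel_measurable_continuous_on_indicator) (use cont_gh(1)[OF hj(1)[of j], of \<epsilon>] \<epsilon> in auto)
    then have "(\<lambda>u. indicator {\<epsilon> / real (Suc j)..\<epsilon>} u * gg u) \<in> borel_measurable lborel" by simp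
    then show ?thesis unfolding f_def by measurable
  qed
  have "(\<integral>\<^sup>+ u\<in>{0<..\<epsilon>}. ennreal (Ph u / \<bar>Ps u\<bar>) \<partial>lborel) \<le> (\<integral>\<^sup>+ u. (SUP j. f j u) \<partial>lborel)"
  proof (rule nn_integral_mono)
    fix u
    show "ennreal (Ph u / \<bar>Ps u\<bar>) * indicator {0<..\<epsilon>} u \<le> (SUP j. f j u)"
    proof (cases "u \<in> {0<..\<epsilon>}")
      case True
      then have u: "0 < u" "u \<le> \<epsilon>" by auto
      obtain j where j: "\<epsilon> < real j * u" using ex_less_of_nat_mult[OF u(1)] by auto
      have "real j * u \<le> real (Suc j) * u" using u by (intro mult_right_mono) auto
      then have "\<epsilon> \<le> u * real (Suc j)" using j by (simp add: mult.commute)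
      then have "\<epsilon> / real (Suc j) \<le> u" by (simp add: divide_simps)
      then have "f j u = ennreal (gg u)" unfolding f_def using u by auto
      moreover have "Ph u / \<bar>Ps u\<bar> = gg u" unfolding gg_def using Psneg[of u] u \<epsilon> by auto
      ultimately have "ennreal (Ph u / \<bar>Ps u\<bar>) * indicator {0<..\<epsilon>} u = f j u" using True by simp
      then show ?thesis by (auto intro: SUP_upper2)
    qed simp
  qed
  also have "\<dots> = (SUP j. integral\<^sup>N lborel (f j))"
    by (rule nn_integral_monotone_convergence_SUP[OF inc meas])
  also have "\<dots> \<le> ennreal K" by (rule SUP_least) (use fint in auto)
  finally show False using div[OF \<epsilon>(1)] by (simp add: top_unique)
qed

end

lemma nf_gen_sub:
  assumes Ym: "\<And>t. t \<ge> 0 \<Longrightarrow> Y t \<in> borel_measurable M" and s: "s \<ge> 0"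
  shows "{Y r -` A \<inter> space M | r A. r \<in> {0..s} \<and> A \<in> sets borel} \<subseteq> sets M"
  using Ym by (auto intro!: measurable_sets)

lemma nf_gen_pow: "{Y r -` A \<inter> space M | r A. r \<in> {0..s} \<and> A \<in> sets borel} \<subseteq> Pow (space M)"
  by auto

lemma nf_space: "space (natural_filtration M Y s) = space M"
  unfolding natural_filtration_def by (simp add: space_measure_of_conv)

lemma nf_sets: "sets (natural_filtration M Y s) = sigma_sets (space M) {Y r -` A \<inter> space M | r A. r \<in> {0..s} \<and> A \<in> sets borel}"
  unfolding natural_filtration_def by (rule sets_measure_of[OF nf_gen_pow])

lemma nf_subalg:
  assumes Ym: "\<And>t. t \<ge> 0 \<Longrightarrow> Y t \<in> borel_measurable M" and s: "s \<ge> 0"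
  shows "subalgebra M (natural_filtration M Y s)"
  unfolding subalgebra_def nf_space nf_sets
  using sets.sigma_sets_subset[OF nf_gen_sub[OF Ym s]] by simp

lemma nf_mono: "s \<le> t \<Longrightarrow> sets (natural_filtration M Y s) \<subseteq> sets (natural_filtration M Y t)"
  unfolding nf_sets by (rule sigma_sets_mono') (auto, metis order_trans)

lemma nf_meas_Y: "s \<ge> 0 \<Longrightarrow> Y s \<in> borel_measurable (natural_filtration M Y s)"
  by (rule measurableI) (auto simp: nf_space nf_sets intro!: sigma_sets.Basic)

lemma CBI_facts:
  assumes "CBI M Ph v x Y"
  shows "prob_space M" "\<And>t. t \<ge> 0 \<Longrightarrow> Y t \<in> borel_measurable M"
    "\<And>t \<omega>. t \<ge> 0 \<Longrightarrow> \<omega> \<in> space M \<Longrightarrow> Y t \<omega> \<ge> 0" "AE \<omega> in M. Y 0 \<omega> = x"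
    "\<And>s t l. s \<ge> 0 \<Longrightarrow> t \<ge> 0 \<Longrightarrow> l \<ge> 0 \<Longrightarrow> AE \<omega> in M.
        real_cond_exp M (natural_filtration M Y s) (\<lambda>\<omega>. exp (- l * Y (s + t) \<omega>)) \<omega>
          = exp (- Y s \<omega> * v t l - integral {0..t} (\<lambda>r. Ph (v r l)))"
  using assms unfolding CBI_def by auto

lemma markov:
  assumes C: "CBI M Ph v x Y" and s: "s \<ge> 0" and t: "t \<ge> 0" and l: "l \<ge> 0"
    and A: "A \<in> sets (natural_filtration M Y s)"
  shows "(\<integral>\<omega>\<in>A. exp (- l * Y (s + t) \<omega>) \<partial>M)
       = exp (- integral {0..t} (\<lambda>r. Ph (v r l))) * (\<integral>\<omega>\<in>A. exp (- Y s \<omega> * v t l) \<partial>M)"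
proof -
  interpret prob_space M using CBI_facts(1)[OF C] .
  have Ym: "\<And>t. t \<ge> 0 \<Longrightarrow> Y t \<in> borel_measurable M" using CBI_facts(2)[OF C] .
  have sub: "subalgebra M (natural_filtration M Y s)" by (rule nf_subalg[OF Ym s])
  interpret sigma_finite_subalgebra M "natural_filtration M Y s"
    by (rule finite_measure_subalgebra_is_sigma_finite)
       (simp add: finite_measure_subalgebra_def finite_measure_subalgebra_axioms_def sub finite_measure_axioms)
  have AM: "A \<in> sets M" using sub A unfolding subalgebra_def by auto
  have st: "s + t \<ge> 0" using s t by simp
  have [measurable]: "Y (s + t) \<in> borel_measurable M" "Y s \<in> borel_measurable M" using Ym st s by auto
  have int: "integrable M (\<lambda>\<omega>. exp (- l * Y (s + t) \<omega>))"
  proof (rule integrable_const_bound[where B=1])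
    show "AE \<omega> in M. norm (exp (- l * Y (s + t) \<omega>)) \<le> 1"
      using CBI_facts(3)[OF C st] l by (auto intro!: AE_I2 simp: mult_nonneg_nonneg)
  qed measurable
  have "(\<integral>\<omega>\<in>A. exp (- l * Y (s + t) \<omega>) \<partial>M)
      = (\<integral>\<omega>\<in>A. real_cond_exp M (natural_filtration M Y s) (\<lambda>\<omega>. exp (- l * Y (s + t) \<omega>)) \<omega> \<partial>M)"
    by (rule real_cond_exp_intA[OF int A])
  also have "\<dots> = (\<integral>\<omega>\<in>A. exp (- Y s \<omega> * v t l - integral {0..t} (\<lambda>r. Ph (v r l))) \<partial>M)"
  proof (rule set_lebesgue_integral_cong_AE)
    show "A \<in> sets M" by fact
    show "real_cond_exp M (natural_filtration M Y s) (\<lambda>\<omega>. exp (- l * Y (s + t) \<omega>)) \<in> borel_measurable M"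
      by measurable
    show "(\<lambda>\<omega>. exp (- Y s \<omega> * v t l - integral {0..t} (\<lambda>r. Ph (v r l)))) \<in> borel_measurable M"
      by measurable
    show "AE \<omega>\<in>A in M. real_cond_exp M (natural_filtration M Y s) (\<lambda>\<omega>. exp (- l * Y (s + t) \<omega>)) \<omega> =
          exp (- Y s \<omega> * v t l - integral {0..t} (\<lambda>r. Ph (v r l)))"
      using CBI_facts(5)[OF C s t l] by auto
  qed
  also have "\<dots> = (\<integral>\<omega>\<in>A. exp (- integral {0..t} (\<lambda>r. Ph (v r l))) * exp (- Y s \<omega> * v t l) \<partial>M)"
    by (simp add: exp_diff exp_minus field_simps)
  also have "\<dots> = exp (- integral {0..t} (\<lambda>r. Ph (v r l))) * (\<integral>\<omega>\<in>A. exp (- Y s \<omega> * v t l) \<partial>M)"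
    by simp
  finally show ?thesis .
qed


locale mainloc = odeloc Ps Ph v d0 k for Ps Ph v d0 k +
  fixes M :: "'a measure" and Y :: "real \<Rightarrow> 'a \<Rightarrow> real" and x :: real and \<eta> :: "real \<Rightarrow> real"
  assumes C: "CBI M Ph v x Y" and x0: "x \<ge> 0" and eta: "\<forall>t\<ge>0. \<eta> t > 0"
    and conv: "AE \<omega> in M. \<exists>L::ereal. ((\<lambda>t. ereal (\<eta> t * Y t \<omega>)) \<longlongrightarrow> L) at_top"
    and div: "\<And>\<epsilon>. \<epsilon> > 0 \<Longrightarrow> (\<integral>\<^sup>+ u\<in>{0<..\<epsilon>}. ennreal (Ph u / \<bar>Ps u\<bar>) \<partial>lborel) = \<infinity>"
begin

lemma PS: "prob_space M" using CBI_facts(1)[OF C] .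
lemma Ym[measurable]: "t \<ge> 0 \<Longrightarrow> Y t \<in> borel_measurable M" using CBI_facts(2)[OF C] .
lemma Ynn: "t \<ge> 0 \<Longrightarrow> \<omega> \<in> space M \<Longrightarrow> Y t \<omega> \<ge> 0" using CBI_facts(3)[OF C] .
lemma Yn_meas[measurable]: "Y (real n) \<in> borel_measurable M" using Ym by simp

lemma sis: "(\<integral>\<omega>\<in>space M. f \<omega> \<partial>M) = (\<integral>\<omega>. f \<omega> \<partial>M)"
  unfolding set_lebesgue_integral_def by (intro Bochner_Integration.integral_cong) auto

lemma intg: assumes "c \<ge> 0" "t \<ge> 0" shows "integrable M (\<lambda>\<omega>. exp (- c * Y t \<omega>))"
proof -
  interpret prob_space M by (rule PS)
  show ?thesis
  proof (rule integrable_const_bound[where B=1])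
    show "AE \<omega> in M. norm (exp (- c * Y t \<omega>)) \<le> 1"
      using Ynn[OF assms(2)] assms by (auto intro!: AE_I2 simp: mult_nonneg_nonneg)
  qed (use assms in measurable)
qed

lemma ELap: assumes "a \<ge> 0" "t \<ge> 0" shows "(\<integral>\<omega>. exp (- a * Y t \<omega>) \<partial>M) = exp (- ff x t a)"
proof -
  interpret prob_space M by (rule PS)
  have "(\<integral>\<omega>\<in>space M. exp (- a * Y (0 + t) \<omega>) \<partial>M)
       = exp (- integral {0..t} (\<lambda>r. Ph (v r a))) * (\<integral>\<omega>\<in>space M. exp (- Y 0 \<omega> * v t a) \<partial>M)"
    by (rule markov[OF C order_refl assms(2,1)]) (metis nf_space sets.top)
  also have "(\<integral>\<omega>\<in>space M. exp (- Y 0 \<omega> * v t a) \<partial>M) = (\<integral>\<omega>. exp (- x * v t a) \<partial>M)"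
    unfolding sis by (rule integral_cong_AE) (use CBI_facts(4)[OF C] in \<open>auto intro!: measurable_compose[OF _ borel_measurable_exp]\<close>)
  also have "\<dots> = exp (- x * v t a)" by (simp add: prob_space)
  finally have 1: "(\<integral>\<omega>. exp (- a * Y t \<omega>) \<partial>M) = exp (- integral {0..t} (\<lambda>r. Ph (v r a))) * exp (- x * v t a)"
    unfolding sis by simp
  have 2: "exp (- ff x t a) = exp (- integral {0..t} (\<lambda>r. Ph (v r a))) * exp (- x * v t a)"
    unfolding ff_def exp_add[symmetric] by (simp add: algebra_simps)
  show ?thesis using 1 2 by simp
qed

lemma ff_mono: assumes "0 \<le> p" "p \<le> q" "t \<ge> 0" shows "ff x t p \<le> ff x t q"
proof -
  have "(\<integral>\<omega>. exp (- q * Y t \<omega>) \<partial>M) \<le> (\<integral>\<omega>. exp (- p * Y t \<omega>) \<partial>M)"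
  proof (rule integral_mono)
    show "integrable M (\<lambda>\<omega>. exp (- q * Y t \<omega>))" "integrable M (\<lambda>\<omega>. exp (- p * Y t \<omega>))"
      using intg assms by auto
    show "exp (- q * Y t \<omega>) \<le> exp (- p * Y t \<omega>)" if "\<omega> \<in> space M" for \<omega>
      using Ynn[OF assms(3) that] assms by (auto intro: mult_right_mono)
  qed
  then show ?thesis using ELap assms by simp
qed

definition W :: "'a \<Rightarrow> ereal" where "W \<omega> = Lim at_top (\<lambda>t. ereal (\<eta> t * Y t \<omega>))"
definition Zs :: "real \<Rightarrow> nat \<Rightarrow> 'a \<Rightarrow> real" where "Zs lam n \<omega> = exp (- (lam * \<eta> (real n)) * Y (real n) \<omega>)"
definition Zl :: "real \<Rightarrow> 'a \<Rightarrow> real" where "Zl lam \<omega> = lim (\<lambda>n. Zs lam n \<omega>)"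
definition EE :: "real \<Rightarrow> ereal \<Rightarrow> real" where "EE lam w = (if w = \<infinity> then 0 else exp (- lam * real_of_ereal w))"

lemma Wconv: "AE \<omega> in M. ((\<lambda>t. ereal (\<eta> t * Y t \<omega>)) \<longlongrightarrow> W \<omega>) at_top"
  using conv by eventually_elim (auto simp: W_def intro: tendsto_Lim[symmetric, THEN subst])

lemma Wconv': "AE \<omega> in M. ((\<lambda>t. ereal (\<eta> t * Y t \<omega>)) \<longlongrightarrow> W \<omega>) at_top \<and> W \<omega> \<ge> 0"
  using Wconv AE_space
proof eventually_elim
  case (elim \<omega>)
  have "eventually (\<lambda>t. 0 \<le> ereal (\<eta> t * Y t \<omega>)) at_top"
    using eventually_ge_at_top[of "0::real"]
  proof eventually_elim
    case (elim t)
    have "0 \<le> \<eta> t" using eta elim by (simp add: less_imp_le)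
    moreover have "0 \<le> Y t \<omega>" using Ynn elim \<open>\<omega> \<in> space M\<close> by simp
    ultimately show ?case by simp
  qed
  then have "0 \<le> W \<omega>" using tendsto_lowerbound[OF elim(1)] by simp
  then show ?case using elim by simp
qed

lemma Zs_meas[measurable]: "Zs lam n \<in> borel_measurable M" unfolding Zs_def by measurable

lemma Zs_bnd: "lam \<ge> 0 \<Longrightarrow> \<omega> \<in> space M \<Longrightarrow> 0 \<le> Zs lam n \<omega> \<and> Zs lam n \<omega> \<le> 1"
  unfolding Zs_def using eta Ynn[of "real n" \<omega>]
  by (auto simp: mult_nonneg_nonneg less_imp_le)

lemma Zl_meas[measurable]: "Zl lam \<in> borel_measurable M" unfolding Zl_def by measurable

lemma Zs_int: "lam \<ge> 0 \<Longrightarrow> (\<integral>\<omega>. Zs lam n \<omega> \<partial>M) = exp (- ff x (real n) (lam * \<eta> (real n)))"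
  unfolding Zs_def using ELap[of "lam * \<eta> (real n)" "real n"] eta by (simp add: less_imp_le)

lemma Zconv: assumes lam: "lam > 0"
  shows "AE \<omega> in M. (\<lambda>n. Zs lam n \<omega>) \<longlonglongrightarrow> EE lam (W \<omega>)"
  using Wconv'
proof eventually_elim
  case (elim \<omega>)
  have s: "(\<lambda>n. ereal (\<eta> (real n) * Y (real n) \<omega>)) \<longlonglongrightarrow> W \<omega>"
    using filterlim_compose[OF elim(1)[THEN conjunct1] filterlim_real_sequentially] by simp
  show ?case
  proof (cases "W \<omega>")
    case (real w)
    then have "(\<lambda>n. \<eta> (real n) * Y (real n) \<omega>) \<longlonglongrightarrow> w" using s by simp
    then have "(\<lambda>n. exp (- lam * (\<eta> (real n) * Y (real n) \<omega>))) \<longlonglongrightarrow> exp (- lam * w)"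
      by (intro tendsto_intros)
    then show ?thesis unfolding Zs_def EE_def using real by (simp add: mult.assoc)
  next
    case PInf
    then have "filterlim (\<lambda>n. \<eta> (real n) * Y (real n) \<omega>) at_top sequentially"
      using s tendsto_PInfty_eq_at_top by auto
    then have "filterlim (\<lambda>n. lam * (\<eta> (real n) * Y (real n) \<omega>)) at_top sequentially"
      by (rule filterlim_tendsto_pos_mult_at_top[OF tendsto_const lam])
    then have "filterlim (\<lambda>n. - (lam * (\<eta> (real n) * Y (real n) \<omega>))) at_bot sequentially"
      by (rule filterlim_compose[OF filterlim_uminus_at_bot_at_top])
    then have "(\<lambda>n. exp (- (lam * (\<eta> (real n) * Y (real n) \<omega>)))) \<longlonglongrightarrow> 0"
      by (rule filterlim_compose[OF exp_at_bot])
    then show ?thesis unfolding Zs_def EE_def using PInf by (simp add: mult.assoc)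
  next
    case MInf
    then show ?thesis using elim by simp
  qed
qed

lemma Zl_eq: assumes lam: "lam > 0"
  shows "AE \<omega> in M. Zl lam \<omega> = EE lam (W \<omega>) \<and> (\<lambda>n. Zs lam n \<omega>) \<longlonglongrightarrow> Zl lam \<omega>"
  using Zconv[OF lam]
proof eventually_elim
  case (elim \<omega>)
  then have "Zl lam \<omega> = EE lam (W \<omega>)" unfolding Zl_def by (rule limI)
  then show ?case using elim by simp
qed

lemma Zl_bnd: assumes lam: "lam > 0" shows "AE \<omega> in M. 0 \<le> Zl lam \<omega> \<and> Zl lam \<omega> \<le> 1"
  using Zl_eq[OF lam] AE_space
proof eventually_elim
  case (elim \<omega>)
  have "eventually (\<lambda>n. 0 \<le> Zs lam n \<omega>) sequentially" "eventually (\<lambda>n. Zs lam n \<omega> \<le> 1) sequentially"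
    using Zs_bnd[of lam \<omega>] lam elim by auto
  then show ?case using elim tendsto_lowerbound[of "\<lambda>n. Zs lam n \<omega>"] tendsto_upperbound[of "\<lambda>n. Zs lam n \<omega>"] by auto
qed

lemma qconv: assumes lam: "lam > 0"
  shows "(\<lambda>n. \<integral>\<omega>. Zs lam n \<omega> \<partial>M) \<longlonglongrightarrow> (\<integral>\<omega>. Zl lam \<omega> \<partial>M)"
proof -
  interpret prob_space M by (rule PS)
  show ?thesis
  proof (rule integral_dominated_convergence[where w="\<lambda>_. 1"])
    show "AE \<omega> in M. (\<lambda>n. Zs lam n \<omega>) \<longlonglongrightarrow> Zl lam \<omega>" using Zl_eq[OF lam] by auto
    show "AE \<omega> in M. norm (Zs lam n \<omega>) \<le> 1" for n using Zs_bnd[of lam] lam by (auto intro!: AE_I2)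
  qed auto
qed

end

context mainloc begin

lemma step_pos:
  assumes lam: "lam > 0" and q: "(\<integral>\<omega>. Zl lam \<omega> \<partial>M) > 0"
  shows "(\<lambda>n. lam * \<eta> (real n)) \<longlonglongrightarrow> 0" "(\<lambda>n. v (real n) (lam * \<eta> (real n))) \<longlonglongrightarrow> 0"
    "(\<lambda>n. ff x (real n) (lam * \<eta> (real n))) \<longlonglongrightarrow> - ln (\<integral>\<omega>. Zl lam \<omega> \<partial>M)"
proof -
  define q where "q = (\<integral>\<omega>. Zl lam \<omega> \<partial>M)"
  define a where "a n = lam * \<eta> (real n)" for n
  have apos: "a n > 0" for n unfolding a_def using lam eta by simp
  have e: "(\<lambda>n. exp (- ff x (real n) (a n))) \<longlonglongrightarrow> q"
    using qconv[OF lam] Zs_int[of lam] lam unfolding q_def a_def by simp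
  have "(\<lambda>n. ln (exp (- ff x (real n) (a n)))) \<longlonglongrightarrow> ln q"
    using q by (intro tendsto_ln e) (simp add: q_def)
  then have "(\<lambda>n. - ff x (real n) (a n)) \<longlonglongrightarrow> ln q" by simp
  then have f3: "(\<lambda>n. ff x (real n) (a n)) \<longlonglongrightarrow> - ln q" using tendsto_minus by fastforce
  then show "(\<lambda>n. ff x (real n) (lam * \<eta> (real n))) \<longlonglongrightarrow> - ln (\<integral>\<omega>. Zl lam \<omega> \<partial>M)"
    unfolding a_def q_def .
  have K: "eventually (\<lambda>n. ff x (real n) (a n) \<le> - ln q + 1) sequentially"
    using order_tendstoD(2)[OF f3, of "- ln q + 1"] by (auto elim: eventually_mono)
  have alim: "a \<longlonglongrightarrow> 0"
    by (rule seqA[OF x0 _ K]) (use apos ff_mono in \<open>auto intro: less_imp_le\<close>)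
  then show "(\<lambda>n. lam * \<eta> (real n)) \<longlonglongrightarrow> 0" unfolding a_def .
  show "(\<lambda>n. v (real n) (lam * \<eta> (real n))) \<longlonglongrightarrow> 0"
    using seqB[OF x0 apos alim K div] unfolding a_def by simp
qed

lemma set_conv:
  assumes A: "A \<in> sets M"
  shows "(\<lambda>n. \<integral>\<omega>\<in>A. Zs 1 n \<omega> \<partial>M) \<longlonglongrightarrow> (\<integral>\<omega>\<in>A. Zl 1 \<omega> \<partial>M)"
proof -
  interpret prob_space M by (rule PS)
  show ?thesis unfolding set_lebesgue_integral_def
  proof (rule integral_dominated_convergence[where w="\<lambda>_. 1"])
    show "AE \<omega> in M. (\<lambda>n. indicator A \<omega> *\<^sub>R Zs 1 n \<omega>) \<longlonglongrightarrow> indicator A \<omega> *\<^sub>R Zl 1 \<omega>"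
      using Zl_eq[OF zero_less_one] by eventually_elim (auto intro: tendsto_intros)
    show "AE \<omega> in M. norm (indicator A \<omega> *\<^sub>R Zs 1 n \<omega>) \<le> 1" for n
      using Zs_bnd[of 1 _ n] by (auto intro!: AE_I2 split: split_indicator)
  qed (use A in auto)
qed

lemma indep:
  assumes q: "(\<integral>\<omega>. Zl 1 \<omega> \<partial>M) > 0" and A: "A \<in> sets (natural_filtration M Y (real m))"
  shows "(\<integral>\<omega>\<in>A. Zl 1 \<omega> \<partial>M) = (\<integral>\<omega>. Zl 1 \<omega> \<partial>M) * measure M A"
proof -
  interpret prob_space M by (rule PS)
  define q1 where "q1 = (\<integral>\<omega>. Zl 1 \<omega> \<partial>M)"
  define a where "a n = \<eta> (real n)" for n
  have apos: "a n > 0" for n unfolding a_def using eta by simp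
  have alim: "a \<longlonglongrightarrow> 0" using step_pos(1)[of 1] q unfolding a_def by simp
  have vlim: "(\<lambda>n. v (real n) (a n)) \<longlonglongrightarrow> 0" using step_pos(2)[of 1] q unfolding a_def by simp
  define c where "c n = v (max 0 (real n - real m)) (a n)" for n
  have cnn: "c n \<ge> 0" for n unfolding c_def using vnn apos[of n] by (simp add: less_imp_le)
  have c0: "c \<longlonglongrightarrow> 0"
  proof (rule real_tendsto_sandwich[where f="\<lambda>n. 0" and h="\<lambda>n. v (real n) (a n)"])
    have e1: "eventually (\<lambda>n. a n < d0) sequentially" using alim d0 by (intro order_tendstoD) auto
    have e2: "eventually (\<lambda>n. v (real n) (a n) < d0) sequentially" using vlim d0 by (intro order_tendstoD) auto
    show "eventually (\<lambda>n. c n \<le> v (real n) (a n)) sequentially"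
      using e1 e2 eventually_ge_at_top[of m]
    proof eventually_elim
      case (elim n)
      have "v (real n - real m) (a n) \<le> v (real n) (a n)"
        by (rule mono_path) (use elim apos[of n] in auto)
      then show ?case unfolding c_def using elim by simp
    qed
  qed (use cnn vlim in auto)
  have sub: "subalgebra M (natural_filtration M Y (real m))" by (rule nf_subalg[OF Ym]) auto
  have AM: "A \<in> sets M" using sub A unfolding subalgebra_def by auto
  have OmF: "space M \<in> sets (natural_filtration M Y (real m))" by (metis nf_space sets.top)
  define B where "B A' n = (\<integral>\<omega>\<in>A'. exp (- Y (real m) \<omega> * c n) \<partial>M)" for A' n
  have Bconv: "(\<lambda>n. B A' n) \<longlonglongrightarrow> measure M A'" if A': "A' \<in> sets M" for A'
  proof -
    have "(\<lambda>n. B A' n) \<longlonglongrightarrow> (\<integral>\<omega>. indicator A' \<omega> *\<^sub>R exp (- Y (real m) \<omega> * 0) \<partial>M)"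
      unfolding B_def set_lebesgue_integral_def
    proof (rule integral_dominated_convergence[where w="\<lambda>_. 1"])
      show "AE \<omega> in M. (\<lambda>n. indicator A' \<omega> *\<^sub>R exp (- Y (real m) \<omega> * c n)) \<longlonglongrightarrow> indicator A' \<omega> *\<^sub>R exp (- Y (real m) \<omega> * 0)"
        by (intro AE_I2 tendsto_intros c0)
      show "AE \<omega> in M. norm (indicator A' \<omega> *\<^sub>R exp (- Y (real m) \<omega> * c n)) \<le> 1" for n
        using Ynn[of "real m"] cnn[of n] by (auto intro!: AE_I2 split: split_indicator simp: mult_nonneg_nonneg)
    qed (use A' in auto)
    also have "(\<integral>\<omega>. indicator A' \<omega> *\<^sub>R exp (- Y (real m) \<omega> * 0) \<partial>M) = measure M A'"
      using A' by (simp add: Int_absorb2 sets.sets_into_space)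
    finally show ?thesis .
  qed
  define D where "D n = exp (- integral {0..real n - real m} (\<lambda>r. Ph (v r (a n))))" for n
  have mk: "(\<integral>\<omega>\<in>A'. Zs 1 n \<omega> \<partial>M) = D n * B A' n"
    if A': "A' \<in> sets (natural_filtration M Y (real m))" and n: "n \<ge> m" for A' n
  proof -
    have "(\<integral>\<omega>\<in>A'. exp (- a n * Y (real m + (real n - real m)) \<omega>) \<partial>M)
       = exp (- integral {0..real n - real m} (\<lambda>r. Ph (v r (a n)))) * (\<integral>\<omega>\<in>A'. exp (- Y (real m) \<omega> * v (real n - real m) (a n)) \<partial>M)"
      by (rule markov[OF C _ _ _ A']) (use n apos[of n] in auto)
    then show ?thesis unfolding Zs_def D_def B_def c_def a_def using n by simp
  qed
  have B1: "(\<lambda>n. B (space M) n) \<longlonglongrightarrow> 1" using Bconv[of "space M"] by (simp add: prob_space)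
  have Z1: "(\<lambda>n. \<integral>\<omega>\<in>space M. Zs 1 n \<omega> \<partial>M) \<longlonglongrightarrow> q1" unfolding sis q1_def using qconv[of 1] by simp
  have Dlim: "D \<longlonglongrightarrow> q1"
  proof -
    have "(\<lambda>n. (\<integral>\<omega>\<in>space M. Zs 1 n \<omega> \<partial>M) / B (space M) n) \<longlonglongrightarrow> q1 / 1"
      by (intro tendsto_divide Z1 B1) simp
    moreover have ev: "eventually (\<lambda>n. 1/2 < B (space M) n) sequentially"
      using order_tendstoD(1)[OF B1, of "1/2"] by (simp only: )
    moreover have "eventually (\<lambda>n. (\<integral>\<omega>\<in>space M. Zs 1 n \<omega> \<partial>M) / B (space M) n = D n) sequentially"
      using ev eventually_ge_at_top[of m]
    proof eventually_elim
      case (elim n)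
      then show ?case using mk[OF OmF elim(2)] by simp
    qed
    ultimately show ?thesis by (simp add: Lim_transform_eventually)
  qed
  have "(\<lambda>n. D n * B A n) \<longlonglongrightarrow> q1 * measure M A" by (intro tendsto_mult Dlim Bconv AM)
  moreover have "eventually (\<lambda>n. D n * B A n = (\<integral>\<omega>\<in>A. Zs 1 n \<omega> \<partial>M)) sequentially"
    using eventually_ge_at_top[of m] by eventually_elim (use mk[OF A] in auto)
  ultimately have "(\<lambda>n. \<integral>\<omega>\<in>A. Zs 1 n \<omega> \<partial>M) \<longlonglongrightarrow> q1 * measure M A" by (rule Lim_transform_eventually)
  then show ?thesis using set_conv[OF AM] LIMSEQ_unique unfolding q1_def by blast
qed

end

context mainloc begin

lemma Zl_int: "integrable M (Zl 1)"
proof -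
  interpret prob_space M by (rule PS)
  show ?thesis
    by (rule integrable_const_bound[where B=1]) (use Zl_bnd[OF zero_less_one] in \<open>auto elim: eventually_mono\<close>)
qed

lemma zl_const:
  assumes q: "(\<integral>\<omega>. Zl 1 \<omega> \<partial>M) > 0"
  shows "AE \<omega> in M. Zl 1 \<omega> = (\<integral>\<omega>. Zl 1 \<omega> \<partial>M)"
proof -
  interpret prob_space M by (rule PS)
  define q1 where "q1 = (\<integral>\<omega>. Zl 1 \<omega> \<partial>M)"
  have q1: "q1 > 0" using q unfolding q1_def .
  define P where "P = (\<Union>m::nat. sets (natural_filtration M Y (real m)))"
  have subm: "sets (natural_filtration M Y (real m)) \<subseteq> sets M" for m
    using nf_subalg[OF Ym, where s="real m"] unfolding subalgebra_def by auto
  have PM: "P \<subseteq> sets M" unfolding P_def using subm by auto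
  have PP: "P \<subseteq> Pow (space M)" using PM sets.sets_into_space by auto
  have Ist: "Int_stable P"
    unfolding Int_stable_def
  proof (intro ballI)
    fix A B assume "A \<in> P" "B \<in> P"
    then obtain m1 m2 where A: "A \<in> sets (natural_filtration M Y (real m1))" and B: "B \<in> sets (natural_filtration M Y (real m2))"
      unfolding P_def by auto
    have "A \<in> sets (natural_filtration M Y (real (max m1 m2)))" using nf_mono[of "real m1" "real (max m1 m2)"] A by auto
    moreover have "B \<in> sets (natural_filtration M Y (real (max m1 m2)))" using nf_mono[of "real m2" "real (max m1 m2)"] B by auto
    ultimately have "A \<inter> B \<in> sets (natural_filtration M Y (real (max m1 m2)))" by (rule sets.Int)
    then show "A \<inter> B \<in> P" unfolding P_def by (rule UN_I[OF UNIV_I])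
  qed
  have "space M \<in> sets (natural_filtration M Y (real 0))" by (metis nf_space sets.top)
  then have Om: "space M \<in> P" unfolding P_def by (rule UN_I[OF UNIV_I])
  define N where "N = density M (\<lambda>\<omega>. ennreal (Zl 1 \<omega>))"
  have sN: "sets N = sets M" "space N = space M" unfolding N_def by auto
  have Zi: "integrable M (Zl 1)" by (rule Zl_int)
  have Zge: "AE \<omega> in M. 0 \<le> Zl 1 \<omega>" using Zl_bnd[OF zero_less_one] by auto
  have eN: "emeasure N A = ennreal (\<integral>\<omega>\<in>A. Zl 1 \<omega> \<partial>M)" if A: "A \<in> sets M" for A
  proof -
    have "emeasure N A = (\<integral>\<^sup>+ \<omega>. ennreal (Zl 1 \<omega>) * indicator A \<omega> \<partial>M)"
      unfolding N_def using A by (simp add: emeasure_density)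
    also have "\<dots> = (\<integral>\<^sup>+ \<omega>. ennreal (indicator A \<omega> * Zl 1 \<omega>) \<partial>M)"
      by (intro nn_integral_cong) (auto split: split_indicator)
    also have "\<dots> = ennreal (\<integral>\<omega>. indicator A \<omega> * Zl 1 \<omega> \<partial>M)"
    proof (rule nn_integral_eq_integral)
      show "integrable M (\<lambda>\<omega>. indicator A \<omega> * Zl 1 \<omega>)"
        using integrable_mult_indicator[OF A Zi] by simp
      show "AE \<omega> in M. 0 \<le> indicator A \<omega> * Zl 1 \<omega>" using Zge by eventually_elim (auto split: split_indicator)
    qed
    finally show ?thesis unfolding set_lebesgue_integral_def by simp
  qed
  have basicP: "emeasure N A = ennreal q1 * emeasure M A" if A: "A \<in> P" for A
  proof -
    obtain m where Am: "A \<in> sets (natural_filtration M Y (real m))" using A unfolding P_def by auto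
    have AM: "A \<in> sets M" using A PM by auto
    have "emeasure N A = ennreal (q1 * measure M A)" using eN[OF AM] indep[OF q Am] unfolding q1_def by simp
    also have "\<dots> = ennreal q1 * emeasure M A" using q1 by (simp add: ennreal_mult emeasure_eq_measure)
    finally show ?thesis .
  qed
  have sigM: "sigma_sets (space M) P \<subseteq> sets M" by (rule sets.sigma_sets_subset[OF PM])
  have all: "emeasure N A = ennreal q1 * emeasure M A" if A: "A \<in> sigma_sets (space M) P" for A
    using Ist PP A
  proof (induction rule: sigma_sets_induct_disjoint)
    case (basic A) then show ?case by (rule basicP)
  next
    case empty then show ?case by simp
  next
    case (compl A)
    have AM: "A \<in> sets M" using compl(1) sigM by auto
    have fin: "emeasure N A \<noteq> \<infinity>" using compl(2) by (simp add: ennreal_mult_eq_top_iff)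
    have "emeasure N (space M - A) = emeasure N (space M) - emeasure N A"
      using emeasure_compl[of A N] AM fin sN by simp
    also have "\<dots> = ennreal q1 * emeasure M (space M) - ennreal q1 * emeasure M A"
      using basicP[OF Om] compl(2) by simp
    also have "\<dots> = ennreal q1 * (emeasure M (space M) - emeasure M A)"
      by (rule ennreal_right_diff_distrib[symmetric]) simp
    also have "\<dots> = ennreal q1 * emeasure M (space M - A)"
      using emeasure_compl[of A M] AM by simp
    finally show ?case .
  next
    case (union A)
    have rA: "range A \<subseteq> sets M" using union(2) sigM by auto
    have "emeasure N (\<Union>i. A i) = (\<Sum>i. emeasure N (A i))"
      using suminf_emeasure[of A N] rA union(1) sN by simp
    also have "\<dots> = (\<Sum>i. ennreal q1 * emeasure M (A i))" using union(3) by simp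
    also have "\<dots> = ennreal q1 * (\<Sum>i. emeasure M (A i))" by simp
    also have "\<dots> = ennreal q1 * emeasure M (\<Union>i. A i)" using suminf_emeasure[of A M] rA union(1) by simp
    finally show ?case .
  qed
  have bint: "(\<integral>\<omega>. indicator A \<omega> * Zl 1 \<omega> \<partial>M) = q1 * measure M A" if A: "A \<in> sigma_sets (space M) P" for A
  proof -
    have AM: "A \<in> sets M" using A sigM by auto
    have "ennreal (\<integral>\<omega>\<in>A. Zl 1 \<omega> \<partial>M) = ennreal (q1 * measure M A)"
      using eN[OF AM] all[OF A] q1 by (simp add: ennreal_mult emeasure_eq_measure)
    moreover have "0 \<le> (\<integral>\<omega>\<in>A. Zl 1 \<omega> \<partial>M)" unfolding set_lebesgue_integral_def
      using Zge by (intro integral_nonneg_AE) (auto split: split_indicator elim: eventually_mono)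
    moreover have "0 \<le> q1 * measure M A" using q1 by simp
    ultimately show ?thesis unfolding set_lebesgue_integral_def by simp
  qed
  let ?S = "sigma (space M) P"
  have spS: "space ?S = space M" by (simp add: space_measure_of_conv)
  have stS: "sets ?S = sigma_sets (space M) P" by (rule sets_measure_of[OF PP])
  have Yn: "Y (real n) \<in> borel_measurable ?S" for n
  proof (rule measurableI)
    fix B :: "real set" assume B: "B \<in> sets borel"
    have "Y (real n) -` B \<inter> space M \<in> sets (natural_filtration M Y (real n))"
      using measurable_sets[OF nf_meas_Y[where s="real n" and M=M and Y=Y] B] unfolding nf_space by simp
    then have "Y (real n) -` B \<inter> space M \<in> P" unfolding P_def by (rule UN_I[OF UNIV_I])
    then show "Y (real n) -` B \<inter> space ?S \<in> sets ?S" unfolding spS stS by (rule sigma_sets.Basic)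
  qed auto
  have ZsS: "Zs 1 n \<in> borel_measurable ?S" for n unfolding Zs_def using Yn by measurable
  have ZlS: "Zl 1 \<in> borel_measurable ?S" unfolding Zl_def using ZsS by measurable
  have Ap: "{\<omega> \<in> space M. q1 < Zl 1 \<omega>} \<in> sigma_sets (space M) P"
  proof -
    have "{\<omega> \<in> space ?S. q1 < Zl 1 \<omega>} \<in> sets ?S" using ZlS by measurable
    then show ?thesis unfolding spS stS .
  qed
  have Am: "{\<omega> \<in> space M. Zl 1 \<omega> < q1} \<in> sigma_sets (space M) P"
  proof -
    have "{\<omega> \<in> space ?S. Zl 1 \<omega> < q1} \<in> sets ?S" using ZlS by measurable
    then show ?thesis unfolding spS stS .
  qed
  have zero: "(\<integral>\<omega>. indicator A \<omega> * (Zl 1 \<omega> - q1) \<partial>M) = 0" if A: "A \<in> sigma_sets (space M) P" for A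
  proof -
    have AM: "A \<in> sets M" using A sigM by auto
    have i1: "integrable M (\<lambda>\<omega>. indicator A \<omega> * Zl 1 \<omega>)" using integrable_mult_indicator[OF AM Zi] by simp
    have i2: "integrable M (\<lambda>\<omega>. indicator A \<omega> * q1)"
      using AM by (intro integrable_mult_left integrable_real_indicator) (auto simp: less_top[symmetric])
    have "(\<integral>\<omega>. indicator A \<omega> * (Zl 1 \<omega> - q1) \<partial>M) = (\<integral>\<omega>. indicator A \<omega> * Zl 1 \<omega> - indicator A \<omega> * q1 \<partial>M)"
      by (simp add: right_diff_distrib)
    also have "\<dots> = (\<integral>\<omega>. indicator A \<omega> * Zl 1 \<omega> \<partial>M) - (\<integral>\<omega>. indicator A \<omega> * q1 \<partial>M)"
      by (rule Bochner_Integration.integral_diff[OF i1 i2])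
    also have "\<dots> = 0" using bint[OF A] AM by (simp add: Int_absorb2 sets.sets_into_space)
    finally show ?thesis .
  qed
  have le: "AE \<omega> in M. Zl 1 \<omega> \<le> q1"
  proof -
    let ?A = "{\<omega> \<in> space M. q1 < Zl 1 \<omega>}"
    have "AE \<omega> in M. indicator ?A \<omega> * (Zl 1 \<omega> - q1) = 0"
    proof (rule integral_nonneg_eq_0_iff_AE[THEN iffD1])
      show "integrable M (\<lambda>\<omega>. indicator ?A \<omega> * (Zl 1 \<omega> - q1))"
        using integrable_mult_indicator[of ?A M "\<lambda>\<omega>. Zl 1 \<omega> - q1"] Zi by simp
      show "AE \<omega> in M. 0 \<le> indicator ?A \<omega> * (Zl 1 \<omega> - q1)" by (auto intro!: AE_I2 split: split_indicator)
      show "(\<integral>\<omega>. indicator ?A \<omega> * (Zl 1 \<omega> - q1) \<partial>M) = 0" by (rule zero[OF Ap])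
    qed
    with AE_space show ?thesis
    proof eventually_elim
      case (elim \<omega>) then show ?case by (cases "q1 < Zl 1 \<omega>") (auto split: split_indicator)
    qed
  qed
  have ge: "AE \<omega> in M. q1 \<le> Zl 1 \<omega>"
  proof -
    let ?A = "{\<omega> \<in> space M. Zl 1 \<omega> < q1}"
    have "AE \<omega> in M. - (indicator ?A \<omega> * (Zl 1 \<omega> - q1)) = 0"
    proof (rule integral_nonneg_eq_0_iff_AE[THEN iffD1])
      show "integrable M (\<lambda>\<omega>. - (indicator ?A \<omega> * (Zl 1 \<omega> - q1)))"
        using integrable_mult_indicator[of ?A M "\<lambda>\<omega>. Zl 1 \<omega> - q1"] Zi by simp
      show "AE \<omega> in M. 0 \<le> - (indicator ?A \<omega> * (Zl 1 \<omega> - q1))" by (auto intro!: AE_I2 split: split_indicator)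
      show "(\<integral>\<omega>. - (indicator ?A \<omega> * (Zl 1 \<omega> - q1)) \<partial>M) = 0" using zero[OF Am] by simp
    qed
    with AE_space show ?thesis
    proof eventually_elim
      case (elim \<omega>) then show ?case by (cases "Zl 1 \<omega> < q1") (auto split: split_indicator)
    qed
  qed
  show ?thesis using le ge unfolding q1_def by eventually_elim simp
qed

end

context mainloc begin

theorem main_result:
  "(AE \<omega> in M. ((\<lambda>t. ereal (\<eta> t * Y t \<omega>)) \<longlongrightarrow> 0) at_top)
     \<or> (AE \<omega> in M. ((\<lambda>t. ereal (\<eta> t * Y t \<omega>)) \<longlongrightarrow> \<infinity>) at_top)"
proof -
  interpret prob_space M by (rule PS)
  define q1 where "q1 = (\<integral>\<omega>. Zl 1 \<omega> \<partial>M)"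
  have bnd1: "AE \<omega> in M. 0 \<le> Zl 1 \<omega> \<and> Zl 1 \<omega> \<le> 1" by (rule Zl_bnd) simp
  have q1nn: "q1 \<ge> 0" unfolding q1_def using bnd1 by (intro integral_nonneg_AE) auto
  have q1le: "q1 \<le> 1"
  proof -
    have "q1 \<le> (\<integral>\<omega>. 1 \<partial>M)" unfolding q1_def
      by (rule integral_mono_AE) (use Zl_int bnd1 in auto)
    then show ?thesis by (simp add: prob_space)
  qed
  show ?thesis
  proof (cases "q1 = 0")
    case True
    have "AE \<omega> in M. Zl 1 \<omega> = 0"
      using integral_nonneg_eq_0_iff_AE[OF Zl_int] bnd1 True unfolding q1_def by auto
    then have "AE \<omega> in M. ((\<lambda>t. ereal (\<eta> t * Y t \<omega>)) \<longlongrightarrow> \<infinity>) at_top"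
      using Zl_eq[OF zero_less_one] Wconv'
    proof eventually_elim
      case (elim \<omega>)
      then have "EE 1 (W \<omega>) = 0" by simp
      then have "W \<omega> = \<infinity>" unfolding EE_def by (auto split: if_splits)
      then show ?case using elim by simp
    qed
    then show ?thesis by simp
  next
    case False
    then have q1p: "q1 > 0" using q1nn by simp
    have Zc: "AE \<omega> in M. Zl 1 \<omega> = q1" using zl_const q1p unfolding q1_def by simp
    define c where "c = - ln q1"
    have c0: "c \<ge> 0" unfolding c_def using q1p q1le by simp
    have Wc: "AE \<omega> in M. W \<omega> = ereal c \<and> ((\<lambda>t. ereal (\<eta> t * Y t \<omega>)) \<longlongrightarrow> W \<omega>) at_top"
      using Zc Zl_eq[OF zero_less_one] Wconv'
    proof eventually_elim
      case (elim \<omega>)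
      then have e: "EE 1 (W \<omega>) = q1" by simp
      then have "W \<omega> \<noteq> \<infinity>" using q1p unfolding EE_def by auto
      moreover have "W \<omega> \<ge> 0" using elim by simp
      ultimately obtain w where w: "W \<omega> = ereal w" by (cases "W \<omega>") auto
      then have "exp (- w) = q1" using e unfolding EE_def by simp
      then have "w = c" unfolding c_def by (metis ln_exp minus_minus)
      then show ?case using w elim by simp
    qed
    show ?thesis
    proof (cases "c = 0")
      case True
      have "AE \<omega> in M. ((\<lambda>t. ereal (\<eta> t * Y t \<omega>)) \<longlongrightarrow> 0) at_top"
        using Wc by eventually_elim (use True in \<open>auto simp: zero_ereal_def\<close>)
      then show ?thesis by simp
    next
      case False
      then have cp: "c > 0" using c0 by simp
      have two: "(2::real) > 0" by simp
      have Z2: "AE \<omega> in M. Zl 2 \<omega> = exp (- 2 * c)"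
        using Wc Zl_eq[OF two]
      proof eventually_elim
        case (elim \<omega>) then show ?case unfolding EE_def by simp
      qed
      have q2: "(\<integral>\<omega>. Zl 2 \<omega> \<partial>M) = exp (- 2 * c)"
      proof -
        have "(\<integral>\<omega>. Zl 2 \<omega> \<partial>M) = (\<integral>\<omega>. exp (- 2 * c) \<partial>M)"
          by (rule integral_cong_AE) (use Z2 in auto)
        then show ?thesis by (simp add: prob_space)
      qed
      have q2p: "(\<integral>\<omega>. Zl 2 \<omega> \<partial>M) > 0" using q2 by simp
      have q1p': "(\<integral>\<omega>. Zl 1 \<omega> \<partial>M) > 0" using q1p unfolding q1_def .
      have alim: "(\<lambda>n. \<eta> (real n)) \<longlonglongrightarrow> 0" using step_pos(1)[OF zero_less_one q1p'] by simp
      have v1: "(\<lambda>n. v (real n) (\<eta> (real n))) \<longlonglongrightarrow> 0" using step_pos(2)[OF zero_less_one q1p'] by simp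
      have f1: "(\<lambda>n. ff x (real n) (\<eta> (real n))) \<longlonglongrightarrow> c"
        using step_pos(3)[OF zero_less_one q1p'] unfolding c_def q1_def by simp
      have v2: "(\<lambda>n. v (real n) (2 * \<eta> (real n))) \<longlonglongrightarrow> 0" using step_pos(2)[OF two q2p] by simp
      have f2: "(\<lambda>n. ff x (real n) (2 * \<eta> (real n))) \<longlonglongrightarrow> 2 * c"
        using step_pos(3)[OF two q2p] unfolding q2 by simp
      have apos: "\<And>n. \<eta> (real n) > 0" using eta by simp
      have "(\<lambda>n. ff x (real n) (2 * \<eta> (real n)) - ff x (real n) (\<eta> (real n))) \<longlonglongrightarrow> 0"
        by (rule seqC[OF x0 apos alim v1 v2])
      moreover have "(\<lambda>n. ff x (real n) (2 * \<eta> (real n)) - ff x (real n) (\<eta> (real n))) \<longlonglongrightarrow> 2 * c - c"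
        by (intro tendsto_diff f1 f2)
      ultimately have "2 * c - c = 0" using LIMSEQ_unique by blast
      then show ?thesis using cp by simp
    qed
  qed
qed

end

theorem theorem3:
  fixes b \<sigma> \<beta> x :: real and \<pi> \<nu> :: "real measure"
    and v :: "real \<Rightarrow> real \<Rightarrow> real"
    and M :: "'a measure" and Y :: "real \<Rightarrow> 'a \<Rightarrow> real" and \<eta> :: "real \<Rightarrow> real"
  assumes "branching_params b \<sigma> \<pi>"
    and "immigration_params \<beta> \<nu>"
    and "b < 0"
    and "solves_v (Psi b \<sigma> \<pi>) v"
    and "x \<ge> 0"
    and "CBI M (Phi \<beta> \<nu>) v x Y"
    and "\<forall>\<epsilon>>0. (\<integral>\<^sup>+ u \<in> {0<..\<epsilon>}. ennreal (Phi \<beta> \<nu> u / \<bar>Psi b \<sigma> \<pi> u\<bar>) \<partial>lborel) = \<infinity>"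
    and "\<forall>t\<ge>0. \<eta> t > 0"
    and "AE \<omega> in M. \<exists>L::ereal. ((\<lambda>t. ereal (\<eta> t * Y t \<omega>)) \<longlongrightarrow> L) at_top"
  shows "(AE \<omega> in M. ((\<lambda>t. ereal (\<eta> t * Y t \<omega>)) \<longlongrightarrow> 0) at_top)
       \<or> (AE \<omega> in M. ((\<lambda>t. ereal (\<eta> t * Y t \<omega>)) \<longlongrightarrow> \<infinity>) at_top)"
proof -
  obtain d where d: "0 < d" "d \<le> 1" "\<And>u. 0 < u \<Longrightarrow> u \<le> d \<Longrightarrow> Psi b \<sigma> \<pi> u \<le> (b/2) * u"
    using psi_near0[OF assms(1,3)] by blast
  interpret mainloc "Psi b \<sigma> \<pi>" "Phi \<beta> \<nu>" v d "- b / 2" M Y x \<eta>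
  proof unfold_locales
    show "0 < d" "d \<le> 1" by (rule d(1), rule d(2))
    show "0 < - b / 2" using assms(3) by simp
    show "Psi b \<sigma> \<pi> 0 = 0" by (rule psi_zero)
    show "Psi b \<sigma> \<pi> u \<le> - (- b / 2) * u" if "0 < u" "u \<le> d" for u using d(3)[OF that] by simp
    show "continuous_on {0..1} (Psi b \<sigma> \<pi>)" by (rule psi_cont[OF assms(1)])
    show "continuous_on {0..Q} (Phi \<beta> \<nu>)" for Q by (rule phi_cont[OF assms(2)])
    show "Phi \<beta> \<nu> p \<le> Phi \<beta> \<nu> q" if "0 \<le> p" "p \<le> q" for p q by (rule phi_mono[OF assms(2) that])
    show "0 < Phi \<beta> \<nu> q" if "0 < q" for q by (rule ip_facts(5)[OF assms(2) that])
    show "Phi \<beta> \<nu> 0 = 0" by (rule phi_zero)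
    show "solves_v (Psi b \<sigma> \<pi>) v" by (rule assms(4))
    show "CBI M (Phi \<beta> \<nu>) v x Y" by (rule assms(6))
    show "0 \<le> x" by (rule assms(5))
    show "\<forall>t\<ge>0. 0 < \<eta> t" by (rule assms(8))
    show "AE \<omega> in M. \<exists>L::ereal. ((\<lambda>t. ereal (\<eta> t * Y t \<omega>)) \<longlongrightarrow> L) at_top" by (rule assms(9))
    show "(\<integral>\<^sup>+ u \<in> {0<..\<epsilon>}. ennreal (Phi \<beta> \<nu> u / \<bar>Psi b \<sigma> \<pi> u\<bar>) \<partial>lborel) = \<infinity>" if "\<epsilon> > 0" for \<epsilon>
      using assms(7) that by blast
  qed
  show ?thesis by (rule main_result)
qed


end
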